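(* Let $h,k\in L^1(0,1)$ be equal a.e. on $[0,\delta]$ for some $\delta\in(0,1)$, and suppose there are real constants $c,\mu,\nu,r$ with $c>0$, $r>-1$ such that $ct^re^{\mu t}\le h(t)\le ct^re^{\nu t}$ for $t\in[0,1]$. Then for every $p\in[1,\infty]$, $V_k^n\sim V_h^n$ on $L^p(0,1)$ as $n\to\infty$, i.e. $\|V_k^n-V_h^n\|_p/\|V_h^n\|_p\to0$.
   Context: For $k\in L^1(0,1)$, $V_k$ is the Volterra convolution operator on $L^p(0,1)$, $(V_ku)(t)=\int_0^tk(t-s)u(s)\,ds$; $\|\cdot\|_p$ is the operator norm on $L^p(0,1)$. For operator sequences, $A_n\sim B_n$ means $\|A_n-B_n\|/\|A_n\|\to0$. (The paper writes the hypothesis as $r>1$, evidently intending $r>-1$.) *)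

theory Defs
  imports "HOL-Analysis.Analysis" "HOL-Probability.Essential_Supremum"
begin

definition Lp_norm :: "ereal \<Rightarrow> (real \<Rightarrow> real) \<Rightarrow> real" where
  "Lp_norm p u =
     (if p = \<infinity> then real_of_ereal (esssup (lebesgue_on {0..1}) (\<lambda>x. ereal \<bar>u x\<bar>))
      else (enn2real (\<integral>\<^sup>+ x. ennreal (\<bar>u x\<bar> powr real_of_ereal p) \<partial>lebesgue_on {0..1}))
             powr (1 / real_of_ereal p))"

definition in_Lp :: "ereal \<Rightarrow> (real \<Rightarrow> real) \<Rightarrow> bool" where
  "in_Lp p u \<longleftrightarrow> u \<in> borel_measurable (lebesgue_on {0..1}) \<and>
     (if p = \<infinity> then esssup (lebesgue_on {0..1}) (\<lambda>x. ereal \<bar>u x\<bar>) < \<infinity>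
      else (\<integral>\<^sup>+ x. ennreal (\<bar>u x\<bar> powr real_of_ereal p) \<partial>lebesgue_on {0..1}) < \<infinity>)"

definition Volterra :: "(real \<Rightarrow> real) \<Rightarrow> (real \<Rightarrow> real) \<Rightarrow> (real \<Rightarrow> real)" where
  "Volterra k u = (\<lambda>t. LINT s:{0..t}|lebesgue. k (t - s) * u s)"

definition op_norm :: "ereal \<Rightarrow> ((real \<Rightarrow> real) \<Rightarrow> (real \<Rightarrow> real)) \<Rightarrow> real" where
  "op_norm p T = Sup ((\<lambda>u. Lp_norm p (T u)) ` {u. in_Lp p u \<and> Lp_norm p u \<le> 1})"

end

theory Submission
  imports Defs "HOL-Real_Asymp.Real_Asymp"
begin

definition conv :: "(real \<Rightarrow> ennreal) \<Rightarrow> (real \<Rightarrow> ennreal) \<Rightarrow> real \<Rightarrow> ennreal" where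
  "conv f g t = (\<integral>\<^sup>+s. f (t - s) * g s \<partial>lborel)"

lemma conv_measurable[measurable]:
  assumes [measurable]: "f \<in> borel_measurable borel" "g \<in> borel_measurable borel"
  shows "conv f g \<in> borel_measurable borel"
  unfolding conv_def[abs_def] by measurable

lemma conv_comm:
  assumes [measurable]: "f \<in> borel_measurable borel" "g \<in> borel_measurable borel"
  shows "conv f g t = conv g f t"
proof -
  have "conv f g t = ennreal \<bar>-1\<bar> * (\<integral>\<^sup>+x. f (t - (t + (-1) * x)) * g (t + (-1) * x) \<partial>lborel)"
    unfolding conv_def by (rule nn_integral_real_affine) auto
  also have "\<dots> = conv g f t" unfolding conv_def by (simp add: mult.commute)
  finally show ?thesis .
qed

lemma conv_assoc:
  assumes [measurable]: "f \<in> borel_measurable borel" "g \<in> borel_measurable borel" "w \<in> borel_measurable borel"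
  shows "conv f (conv g w) t = conv (conv f g) w t"
proof -
  have "conv f (conv g w) t = (\<integral>\<^sup>+s. \<integral>\<^sup>+\<sigma>. f (t - s) * (g (s - \<sigma>) * w \<sigma>) \<partial>lborel \<partial>lborel)"
    unfolding conv_def by (intro nn_integral_cong) (simp add: nn_integral_cmult)
  also have "\<dots> = (\<integral>\<^sup>+\<sigma>. \<integral>\<^sup>+s. f (t - s) * (g (s - \<sigma>) * w \<sigma>) \<partial>lborel \<partial>lborel)"
    by (rule lborel_pair.Fubini'[symmetric]) measurable
  also have "\<dots> = (\<integral>\<^sup>+\<sigma>. (\<integral>\<^sup>+s. f (t - s) * g (s - \<sigma>) \<partial>lborel) * w \<sigma> \<partial>lborel)"
    by (intro nn_integral_cong, subst nn_integral_multc[symmetric]) (auto simp: mult.assoc)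
  also have "\<dots> = (\<integral>\<^sup>+\<sigma>. conv f g (t - \<sigma>) * w \<sigma> \<partial>lborel)"
  proof (intro nn_integral_cong)
    fix \<sigma> :: real
    have "(\<integral>\<^sup>+s. f (t - s) * g (s - \<sigma>) \<partial>lborel) = ennreal \<bar>1\<bar> * (\<integral>\<^sup>+x. f (t - (\<sigma> + 1 * x)) * g (\<sigma> + 1 * x - \<sigma>) \<partial>lborel)"
      by (rule nn_integral_real_affine) auto
    also have "\<dots> = conv f g (t - \<sigma>)" unfolding conv_def by (simp add: algebra_simps)
    finally show "(\<integral>\<^sup>+s. f (t - s) * g (s - \<sigma>) \<partial>lborel) * w \<sigma> = conv f g (t - \<sigma>) * w \<sigma>" by simp
  qed
  also have "\<dots> = conv (conv f g) w t" unfolding conv_def ..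
  finally show ?thesis .
qed

lemma conv_integral:
  assumes [measurable]: "f \<in> borel_measurable borel" "g \<in> borel_measurable borel"
  shows "(\<integral>\<^sup>+t. conv f g t \<partial>lborel) = (\<integral>\<^sup>+x. f x \<partial>lborel) * (\<integral>\<^sup>+x. g x \<partial>lborel)"
proof -
  have "(\<integral>\<^sup>+t. conv f g t \<partial>lborel) = (\<integral>\<^sup>+t. \<integral>\<^sup>+s. f (t - s) * g s \<partial>lborel \<partial>lborel)"
    unfolding conv_def ..
  also have "\<dots> = (\<integral>\<^sup>+s. \<integral>\<^sup>+t. f (t - s) * g s \<partial>lborel \<partial>lborel)"
    by (rule lborel_pair.Fubini'[symmetric]) measurable
  also have "\<dots> = (\<integral>\<^sup>+s. (\<integral>\<^sup>+x. f x \<partial>lborel) * g s \<partial>lborel)"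
  proof (intro nn_integral_cong)
    fix s :: real
    have "(\<integral>\<^sup>+t. f (t - s) \<partial>lborel) = ennreal \<bar>1\<bar> * (\<integral>\<^sup>+x. f (s + 1 * x - s) \<partial>lborel)"
      by (rule nn_integral_real_affine) auto
    then show "(\<integral>\<^sup>+t. f (t - s) * g s \<partial>lborel) = (\<integral>\<^sup>+x. f x \<partial>lborel) * g s"
      by (simp add: nn_integral_multc)
  qed
  also have "\<dots> = (\<integral>\<^sup>+x. f x \<partial>lborel) * (\<integral>\<^sup>+x. g x \<partial>lborel)"
    by (simp add: nn_integral_cmult)
  finally show ?thesis .
qed

lemma conv_add_left:
  assumes [measurable]: "f \<in> borel_measurable borel" "g \<in> borel_measurable borel" "w \<in> borel_measurable borel"
  shows "conv (\<lambda>x. f x + g x) w t = conv f w t + conv g w t"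
  unfolding conv_def by (simp add: distrib_right nn_integral_add)

lemma conv_mono:
  assumes "\<And>x. f x \<le> f' x" "\<And>x. g x \<le> g' x"
  shows "conv f g t \<le> conv f' g' t"
  unfolding conv_def by (intro nn_integral_mono mult_mono) (auto simp: assms)

definition pw :: "real \<Rightarrow> real \<Rightarrow> real \<Rightarrow> ennreal" where
  "pw l a y = ennreal (if 0 < y then exp (l * y) * y powr a else 0)"

lemma pw_measurable[measurable]: "pw l a \<in> borel_measurable borel"
  unfolding pw_def[abs_def] by measurable

lemma Beta_pos: "0 < (a::real) \<Longrightarrow> 0 < b \<Longrightarrow> 0 < Beta a b"
proof -
  assume "0 < a" "0 < b"
  then show ?thesis unfolding Beta_def
    by (simp add: Gamma_real_pos_exp[of a] Gamma_real_pos_exp[of b] Gamma_real_pos_exp[of "a+b"])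
qed

lemma nn_Beta:
  assumes "a > -1" "b > -1"
  shows "(\<integral>\<^sup>+x. ennreal (indicator {0..1} x * (x powr a * (1 - x) powr b)) \<partial>lborel) = ennreal (Beta (a+1) (b+1))"
proof -
  have "((\<lambda>t. t powr (a + 1 - 1) * (1 - t) powr (b + 1 - 1)) has_integral Beta (a+1) (b+1)) {0..1}"
    using assms by (intro has_integral_Beta_real) auto
  then have "integral\<^sup>N lborel (\<lambda>x. indicator {0..1} x * (x powr a * (1 - x) powr b)) = ennreal (Beta (a+1) (b+1))"
    by (intro nn_integral_has_integral_lebesgue) auto
  then show ?thesis by simp
qed

lemma conv_pw:
  assumes a: "a > -1" and b: "b > -1"
  shows "conv (pw l b) (pw l a) y = ennreal (Beta (a+1) (b+1)) * pw l (a+b+1) y"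
proof (cases "y > 0")
  case False
  have "(\<lambda>s. pw l b (y - s) * pw l a s) = (\<lambda>s. 0)"
    using False by (auto simp: pw_def)
  then have "conv (pw l b) (pw l a) y = 0" unfolding conv_def by simp
  then show ?thesis using False by (simp add: pw_def)
next
  case True
  let ?F = "\<lambda>s. ennreal (indicator {0..y} s * (exp (l * y) * ((y - s) powr b * s powr a)))"
  have "conv (pw l b) (pw l a) y = (\<integral>\<^sup>+s. ?F s \<partial>lborel)"
    unfolding conv_def
  proof (intro nn_integral_cong)
    fix s :: real
    show "pw l b (y - s) * pw l a s = ?F s"
      unfolding pw_def
      by (cases "0 < s"; cases "s < y")
         (auto simp: indicator_def ennreal_mult'[symmetric] exp_add[symmetric] algebra_simps)
  qed
  also have "\<dots> = ennreal \<bar>y\<bar> * (\<integral>\<^sup>+x. ?F (0 + y * x) \<partial>lborel)"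
    by (rule nn_integral_real_affine) (use True in auto)
  also have "\<dots> = ennreal y * (\<integral>\<^sup>+x. ennreal (exp (l * y) * y powr (a + b)) *
      ennreal (indicator {0..1} x * (x powr a * (1 - x) powr b)) \<partial>lborel)"
  proof -
    have "?F (0 + y * x) = ennreal (exp (l * y) * y powr (a + b)) *
      ennreal (indicator {0..1} x * (x powr a * (1 - x) powr b))" for x
    proof (cases "x \<in> {0..1}")
      case True
      have yx: "y - y * x = y * (1 - x)" by (simp add: algebra_simps)
      have "0 \<le> 1 - x" using True by auto
      then have "(y - y * x) powr b * (y * x) powr a = y powr (a+b) * (x powr a * (1 - x) powr b)"
        unfolding yx using True \<open>y > 0\<close> by (simp add: powr_mult powr_add)
      moreover have "y * x \<in> {0..y}" using True \<open>y > 0\<close> by (auto simp: mult_le_cancel_left1)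
      ultimately show ?thesis using True \<open>y > 0\<close>
        by (simp add: ennreal_mult'[symmetric] mult_ac)
    next
      case False
      then have "y * x \<notin> {0..y}" using \<open>y > 0\<close>
        by (auto simp: zero_le_mult_iff mult_le_cancel_left1)
      then show ?thesis using False by simp
    qed
    then show ?thesis using \<open>y > 0\<close> by simp
  qed
  also have "\<dots> = ennreal y * (ennreal (exp (l * y) * y powr (a + b)) * ennreal (Beta (a+1) (b+1)))"
    by (subst nn_integral_cmult) (auto simp: nn_Beta a b)
  also have "\<dots> = ennreal (Beta (a+1) (b+1)) * pw l (a+b+1) y"
    using True by (simp add: pw_def ennreal_mult'[symmetric] powr_add mult_ac ennreal_mult''[symmetric])
  finally show ?thesis .
qed

lemma nn_integral_reflect:
  fixes f :: "real \<Rightarrow> ennreal"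
  assumes [measurable]: "f \<in> borel_measurable borel"
  shows "(\<integral>\<^sup>+s. f (t - s) \<partial>lborel) = (\<integral>\<^sup>+x. f x \<partial>lborel)"
proof -
  have "(\<integral>\<^sup>+x. f x \<partial>lborel) = ennreal \<bar>-1\<bar> * (\<integral>\<^sup>+x. f (t + (-1) * x) \<partial>lborel)"
    by (rule nn_integral_real_affine) auto
  then show ?thesis by simp
qed

lemma conv_cmult:
  assumes [measurable]: "f \<in> borel_measurable borel" "g \<in> borel_measurable borel"
  shows "conv (\<lambda>x. a * f x) (\<lambda>x. b * g x) t = a * b * conv f g t"
  unfolding conv_def by (subst nn_integral_cmult[symmetric]) (auto simp: mult_ac)

lemma conv_bound_left:
  assumes [measurable]: "f \<in> borel_measurable borel"
  assumes "\<And>s. g s \<le> B \<or> f (t - s) = 0"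
  shows "conv f g t \<le> (\<integral>\<^sup>+x. f x \<partial>lborel) * B"
proof -
  have "conv f g t \<le> (\<integral>\<^sup>+s. f (t - s) * B \<partial>lborel)"
    unfolding conv_def
  proof (intro nn_integral_mono)
    fix s show "f (t - s) * g s \<le> f (t - s) * B"
      using assms(2)[of s] by (auto intro: mult_left_mono)
  qed
  also have "\<dots> = (\<integral>\<^sup>+x. f x \<partial>lborel) * B"
    by (simp add: nn_integral_multc nn_integral_reflect)
  finally show ?thesis .
qed

lemma conv_bound_right:
  assumes [measurable]: "g \<in> borel_measurable borel"
  assumes "\<And>s. f (t - s) \<le> B \<or> g s = 0"
  shows "conv f g t \<le> B * (\<integral>\<^sup>+x. g x \<partial>lborel)"
proof -
  have "conv f g t \<le> (\<integral>\<^sup>+s. B * g s \<partial>lborel)"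
    unfolding conv_def
  proof (intro nn_integral_mono)
    fix s show "f (t - s) * g s \<le> B * g s"
      using assms(2)[of s] by (auto intro: mult_right_mono)
  qed
  also have "\<dots> = B * (\<integral>\<^sup>+x. g x \<partial>lborel)"
    by (simp add: nn_integral_cmult)
  finally show ?thesis .
qed

lemma conv_zero_left:
  assumes "\<And>x. x \<le> 0 \<Longrightarrow> f x = 0" "\<And>x. x < 0 \<Longrightarrow> g x = 0" "t \<le> 0"
  shows "conv f g t = 0"
proof -
  have "(\<lambda>s. f (t - s) * g s) = (\<lambda>s. 0)"
  proof
    fix s show "f (t - s) * g s = 0"
      using assms by (cases "s < 0") auto
  qed
  then show ?thesis unfolding conv_def by simp
qed

lemma conv_sum_right:
  assumes [measurable]: "f \<in> borel_measurable borel" "\<And>j. j \<in> J \<Longrightarrow> v j \<in> borel_measurable borel"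
  shows "conv f (\<lambda>s. \<Sum>j\<in>J. a j * v j s) t = (\<Sum>j\<in>J. a j * conv f (v j) t)"
proof -
  have "conv f (\<lambda>s. \<Sum>j\<in>J. a j * v j s) t = (\<integral>\<^sup>+s. (\<Sum>j\<in>J. a j * (f (t - s) * v j s)) \<partial>lborel)"
    unfolding conv_def by (intro nn_integral_cong) (simp add: sum_distrib_left mult_ac)
  also have "\<dots> = (\<Sum>j\<in>J. (\<integral>\<^sup>+s. a j * (f (t - s) * v j s) \<partial>lborel))"
    by (rule nn_integral_sum) (use assms in measurable)
  also have "\<dots> = (\<Sum>j\<in>J. a j * conv f (v j) t)"
    unfolding conv_def by (intro sum.cong refl nn_integral_cmult) (use assms in measurable)
  finally show ?thesis .
qed

primrec cpow :: "(real \<Rightarrow> ennreal) \<Rightarrow> nat \<Rightarrow> real \<Rightarrow> ennreal" where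
  "cpow F 0 = F"
| "cpow F (Suc n) = conv F (cpow F n)"

lemma cpow_measurable[measurable]:
  "F \<in> borel_measurable borel \<Longrightarrow> cpow F n \<in> borel_measurable borel"
  by (induction n) auto

lemma funpow_conv_measurable[measurable]:
  "F \<in> borel_measurable borel \<Longrightarrow> w \<in> borel_measurable borel \<Longrightarrow> (conv F ^^ n) w \<in> borel_measurable borel"
  by (induction n) auto

lemma funpow_conv:
  assumes [measurable]: "F \<in> borel_measurable borel" "w \<in> borel_measurable borel"
  shows "(conv F ^^ Suc n) w = conv (cpow F n) w"
proof (induction n)
  case 0 then show ?case by simp
next
  case (Suc n)
  have "(conv F ^^ Suc (Suc n)) w = conv F (conv (cpow F n) w)"
    using Suc by simp
  also have "\<dots> = conv (cpow F (Suc n)) w"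
    by (rule ext, simp add: conv_assoc)
  finally show ?case .
qed

lemma funpow_conv_integral:
  assumes [measurable]: "F \<in> borel_measurable borel" "w \<in> borel_measurable borel"
  shows "(\<integral>\<^sup>+t. (conv F ^^ n) w t \<partial>lborel) = (\<integral>\<^sup>+x. F x \<partial>lborel) ^ n * (\<integral>\<^sup>+x. w x \<partial>lborel)"
  by (induction n) (auto simp: conv_integral mult_ac)

lemma conv_commute_op:
  assumes [measurable]: "F \<in> borel_measurable borel" "K \<in> borel_measurable borel" "w \<in> borel_measurable borel"
  shows "conv F ((conv K ^^ j) w) = (conv K ^^ j) (conv F w)"
  using assms(3)
proof (induction j arbitrary: w)
  case 0 then show ?case by simp
next
  case (Suc j)
  note [measurable] = Suc.prems
  have "conv F ((conv K ^^ Suc j) w) = conv F (conv K ((conv K ^^ j) w))" by simp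
  also have "\<dots> = conv K (conv F ((conv K ^^ j) w))"
  proof -
    have "conv F K = conv K F" by (rule ext) (rule conv_comm; simp)
    then show ?thesis by (intro ext) (simp add: conv_assoc)
  qed
  also have "\<dots> = conv K ((conv K ^^ j) (conv F w))" using Suc by simp
  finally show ?case by (simp add: funpow_swap1)
qed

primrec Acoef :: "real \<Rightarrow> nat \<Rightarrow> real" where
  "Acoef q 0 = 1"
| "Acoef q (Suc i) = Acoef q i * Beta (real (Suc i) * q) q"

lemma Acoef_pos: "q > 0 \<Longrightarrow> Acoef q i > 0"
  by (induction i) (auto intro!: Beta_pos mult_pos_pos)

locale ker =
  fixes hb kb :: "real \<Rightarrow> real" and c \<mu> \<nu> r \<delta> :: real
  assumes hb_meas[measurable]: "hb \<in> borel_measurable borel"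
    and kb_meas[measurable]: "kb \<in> borel_measurable borel"
    and hb_supp: "\<And>x. x \<notin> {0<..1} \<Longrightarrow> hb x = 0"
    and kb_supp: "\<And>x. x \<notin> {0<..1} \<Longrightarrow> kb x = 0"
    and kb_eq: "\<And>x. x \<le> \<delta> \<Longrightarrow> kb x = hb x"
    and lowerb: "\<And>x. x \<in> {0<..1} \<Longrightarrow> c * x powr r * exp (\<mu> * x) \<le> hb x"
    and upperb: "\<And>x. x \<in> {0<..1} \<Longrightarrow> hb x \<le> c * x powr r * exp (\<nu> * x)"
    and c_pos: "c > 0" and r_gt: "r > -1" and \<delta>_pos: "\<delta> > 0" and \<delta>_lt: "\<delta> < 1"
    and hint: "(\<integral>\<^sup>+x. ennreal \<bar>hb x\<bar> \<partial>lborel) < \<infinity>"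
    and kint: "(\<integral>\<^sup>+x. ennreal \<bar>kb x\<bar> \<partial>lborel) < \<infinity>"
begin

definition "H x = ennreal (hb x)"
definition "G x = ennreal \<bar>kb x - hb x\<bar>"
definition "q = r + 1"
definition "\<nu>' = max \<nu> 0"
definition "A = Acoef q"

lemma H_meas[measurable]: "H \<in> borel_measurable borel" unfolding H_def[abs_def] by measurable
lemma G_meas[measurable]: "G \<in> borel_measurable borel" unfolding G_def[abs_def] by measurable

lemma q_pos: "q > 0" using r_gt by (simp add: q_def)
lemma A_pos: "A i > 0" unfolding A_def using q_pos by (rule Acoef_pos)

lemma hb_nonneg: "hb x \<ge> 0"
proof (cases "x \<in> {0<..1}")
  case True
  have "0 \<le> c * x powr r * exp (\<mu> * x)" using c_pos by simp
  then show ?thesis using lowerb[OF True] by linarith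
qed (simp add: hb_supp)

lemma H_zero: "x \<le> 0 \<Longrightarrow> H x = 0" by (simp add: H_def hb_supp)
lemma G_zero: "x \<le> \<delta> \<Longrightarrow> G x = 0" by (simp add: G_def kb_eq)

lemma H_upper: "H y \<le> ennreal c * pw \<nu>' r y"
proof (cases "y \<in> {0<..1}")
  case True
  have "hb y \<le> c * y powr r * exp (\<nu> * y)" by (rule upperb[OF True])
  also have "\<dots> \<le> c * y powr r * exp (\<nu>' * y)"
    using True c_pos by (intro mult_left_mono) (auto simp: \<nu>'_def intro!: mult_right_mono)
  finally show ?thesis using True c_pos
    by (simp add: H_def pw_def ennreal_mult'[symmetric] mult_ac)
qed (simp add: H_def hb_supp)

lemma H_lower: "y \<le> 1 \<Longrightarrow> ennreal c * pw \<mu> r y \<le> H y"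
proof (cases "y \<in> {0<..1}")
  case True
  then show ?thesis using lowerb[OF True] c_pos
    by (simp add: H_def pw_def ennreal_mult'[symmetric] mult_ac ennreal_leI)
qed (auto simp: pw_def)

lemma A_Suc: "A (Suc i) = A i * Beta (real (Suc i) * q) q" by (simp add: A_def)

lemma Aeq: "ennreal c * ennreal (c ^ (i+1) * A i) * (ennreal (Beta ((real (i+1) * q - 1)+1) (r+1)) * pw l ((real (i+1) * q - 1)+r+1) y)
   = ennreal (c ^ (Suc i + 1) * A (Suc i)) * pw l (real (Suc i + 1) * q - 1) y"
proof -
  have e: "(real (i+1) * q - 1) + 1 = real (Suc i) * q" "r + 1 = q" "(real (i+1) * q - 1) + r + 1 = real (Suc i + 1) * q - 1"
    by (auto simp: q_def algebra_simps)
  have n1: "0 \<le> c ^ (i+1) * A i" using A_pos[of i] c_pos by simp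
  have n2: "0 \<le> Beta (real (Suc i) * q) q" using q_pos
    by (intro less_imp_le Beta_pos) auto
  have "ennreal (c ^ (Suc i + 1) * A (Suc i)) = ennreal (c * (c ^ (i+1) * A i) * Beta (real (Suc i) * q) q)"
    by (simp add: A_Suc mult_ac)
  also have "\<dots> = ennreal c * ennreal (c ^ (i+1) * A i) * ennreal (Beta (real (Suc i) * q) q)"
    using n1 n2 c_pos by (simp add: ennreal_mult)
  finally show ?thesis unfolding e by (simp add: mult_ac)
qed

lemma cpow_upper: "cpow H i y \<le> ennreal (c ^ (i+1) * A i) * pw \<nu>' (real (i+1) * q - 1) y"
proof (induction i arbitrary: y)
  case 0 then show ?case using H_upper by (simp add: A_def q_def)
next
  case (Suc i)
  let ?a = "real (i+1) * q - 1"
  have a: "?a > -1"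
  proof -
    have "0 \<le> q * real i" using q_pos by simp
    moreover have "?a = q * real i + q - 1" by (simp add: algebra_simps)
    ultimately show ?thesis using q_pos by linarith
  qed
  have "cpow H (Suc i) y = conv H (cpow H i) y" by simp
  also have "\<dots> \<le> conv (\<lambda>x. ennreal c * pw \<nu>' r x) (\<lambda>x. ennreal (c ^ (i+1) * A i) * pw \<nu>' ?a x) y"
    by (intro conv_mono H_upper Suc)
  also have "\<dots> = ennreal c * ennreal (c ^ (i+1) * A i) * (ennreal (Beta (?a+1) (r+1)) * pw \<nu>' (?a+r+1) y)"
    unfolding conv_cmult[OF pw_measurable pw_measurable] conv_pw[OF a r_gt] ..
  also have "\<dots> = ennreal (c ^ (Suc i + 1) * A (Suc i)) * pw \<nu>' (real (Suc i + 1) * q - 1) y"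
    by (rule Aeq)
  finally show ?case .
qed

lemma cpow_lower: "y \<le> 1 \<Longrightarrow> ennreal (c ^ (i+1) * A i) * pw \<mu> (real (i+1) * q - 1) y \<le> cpow H i y"
proof (induction i arbitrary: y)
  case 0 then show ?case using H_lower by (simp add: A_def q_def)
next
  case (Suc i)
  let ?a = "real (i+1) * q - 1"
  have a: "?a > -1"
  proof -
    have "0 \<le> q * real i" using q_pos by simp
    moreover have "?a = q * real i + q - 1" by (simp add: algebra_simps)
    ultimately show ?thesis using q_pos by linarith
  qed
  have "ennreal (c ^ (Suc i + 1) * A (Suc i)) * pw \<mu> (real (Suc i + 1) * q - 1) y
      = ennreal c * ennreal (c ^ (i+1) * A i) * (ennreal (Beta (?a+1) (r+1)) * pw \<mu> (?a+r+1) y)"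
    by (rule Aeq[symmetric])
  also have "\<dots> = conv (\<lambda>x. ennreal c * pw \<mu> r x) (\<lambda>x. ennreal (c ^ (i+1) * A i) * pw \<mu> ?a x) y"
    unfolding conv_cmult[OF pw_measurable pw_measurable] conv_pw[OF a r_gt] ..
  also have "\<dots> \<le> conv H (cpow H i) y"
    unfolding conv_def
  proof (intro nn_integral_mono)
    fix s
    show "ennreal c * pw \<mu> r (y - s) * (ennreal (c ^ (i + 1) * A i) * pw \<mu> ?a s) \<le> H (y - s) * cpow H i s"
    proof (cases "0 < s \<and> s < y")
      case True
      then show ?thesis using Suc.prems
        by (intro mult_mono H_lower Suc.IH) auto
    next
      case False
      then have "pw \<mu> r (y - s) = 0 \<or> pw \<mu> ?a s = 0" by (auto simp: pw_def)
      then show ?thesis by auto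
    qed
  qed
  also have "\<dots> = cpow H (Suc i) y" by simp
  finally show ?case .
qed

end

context ker begin

definition "Gn = (\<integral>\<^sup>+x. G x \<partial>lborel)"

lemma G_shift_bound:
  assumes [measurable]: "v \<in> borel_measurable borel" and v: "\<And>s. s \<le> T \<Longrightarrow> v s \<le> B"
  shows "t \<le> T + real j * \<delta> \<Longrightarrow> (conv G ^^ j) v t \<le> Gn ^ j * B"
proof (induction j arbitrary: t)
  case 0 then show ?case using v by simp
next
  case (Suc j)
  have "conv G ((conv G ^^ j) v) t \<le> (\<integral>\<^sup>+x. G x \<partial>lborel) * (Gn ^ j * B)"
  proof (rule conv_bound_left)
    fix s
    show "(conv G ^^ j) v s \<le> Gn ^ j * B \<or> G (t - s) = 0"
    proof (cases "s \<le> T + real j * \<delta>")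
      case True then show ?thesis using Suc.IH by auto
    next
      case False
      then have "t - s \<le> \<delta>" using Suc.prems by (simp add: algebra_simps)
      then show ?thesis by (simp add: G_zero)
    qed
  qed measurable
  then show ?case by (simp add: mult_ac Gn_def[symmetric])
qed

lemma G_shift_zero:
  assumes v: "\<And>s. s < T \<Longrightarrow> v s = 0"
  shows "t < T + real j * \<delta> \<Longrightarrow> (conv G ^^ j) v t = 0"
proof (induction j arbitrary: t)
  case 0 then show ?case using v by simp
next
  case (Suc j)
  have "(\<lambda>s. G (t - s) * (conv G ^^ j) v s) = (\<lambda>s. 0)"
  proof
    fix s
    show "G (t - s) * (conv G ^^ j) v s = 0"
    proof (cases "s < T + real j * \<delta>")
      case True then show ?thesis using Suc.IH by auto
    next
      case False
      then have "t - s \<le> \<delta>" using Suc.prems by (simp add: algebra_simps)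
      then show ?thesis by (simp add: G_zero)
    qed
  qed
  have "(conv G ^^ Suc j) v t = (\<integral>\<^sup>+s. G (t - s) * (conv G ^^ j) v s \<partial>lborel)"
    by (subst funpow.simps(2), subst o_apply, subst conv_def, rule refl)
  then show ?case using \<open>(\<lambda>s. G (t - s) * (conv G ^^ j) v s) = (\<lambda>s. 0)\<close> by simp
qed

lemma pw_le_bound:
  assumes "0 \<le> a" "y \<le> T" "T \<le> 1" "0 < T"
  shows "pw \<nu>' a y \<le> ennreal (exp \<nu>' * T powr a)"
proof (cases "0 < y")
  case True
  have "exp (\<nu>' * y) \<le> exp \<nu>'"
    using True assms by (auto simp: \<nu>'_def intro!: mult_left_le)
  moreover have "y powr a \<le> T powr a" using True assms by (intro powr_mono2) auto
  ultimately have "exp (\<nu>' * y) * y powr a \<le> exp \<nu>' * T powr a"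
    by (intro mult_mono) auto
  then show ?thesis using True by (simp add: pw_def ennreal_leI)
qed (simp add: pw_def)

definition "Bd i = c ^ i * A (i - 1) * exp \<nu>' * (1 - \<delta>) powr (real i * q - 1)"

lemma Bd_nonneg: "Bd i \<ge> 0"
  unfolding Bd_def by (intro mult_nonneg_nonneg) (use c_pos A_pos[of "i-1"] in auto)

lemma H_pow_bound:
  assumes [measurable]: "w \<in> borel_measurable borel" and w0: "\<And>s. s < 0 \<Longrightarrow> w s = 0"
    and i: "i \<ge> 1" "real i * q \<ge> 1" and s: "s \<le> 1 - \<delta>"
  shows "(conv H ^^ i) w s \<le> ennreal (Bd i) * (\<integral>\<^sup>+x. w x \<partial>lborel)"
proof -
  obtain k where k: "i = Suc k" using i by (cases i) auto
  have "(conv H ^^ i) w s = conv (cpow H k) w s" unfolding k by (simp add: funpow_conv del: funpow.simps)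
  also have "\<dots> \<le> ennreal (Bd i) * (\<integral>\<^sup>+x. w x \<partial>lborel)"
  proof (rule conv_bound_right)
    fix \<sigma>
    show "cpow H k (s - \<sigma>) \<le> ennreal (Bd i) \<or> w \<sigma> = 0"
    proof (cases "\<sigma> < 0")
      case True then show ?thesis using w0 by auto
    next
      case False
      have "cpow H k (s - \<sigma>) \<le> ennreal (c ^ (k+1) * A k) * pw \<nu>' (real (k+1) * q - 1) (s - \<sigma>)"
        by (rule cpow_upper)
      also have "\<dots> \<le> ennreal (c ^ (k+1) * A k) * ennreal (exp \<nu>' * (1 - \<delta>) powr (real (k+1) * q - 1))"
        using False s i \<delta>_pos \<delta>_lt unfolding k
        by (intro mult_left_mono pw_le_bound) auto
      also have "\<dots> = ennreal (Bd i)"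
        using c_pos A_pos[of k] unfolding k Bd_def by (simp add: ennreal_mult[symmetric] mult_ac)
      finally show ?thesis by simp
    qed
  qed measurable
  finally show ?thesis .
qed

definition "Op w j i = (conv G ^^ j) ((conv H ^^ i) w)"

lemma Op_measurable[measurable]: "w \<in> borel_measurable borel \<Longrightarrow> Op w j i \<in> borel_measurable borel"
  unfolding Op_def by measurable

lemma Op_H:
  assumes [measurable]: "w \<in> borel_measurable borel"
  shows "conv H (Op w j i) = Op w j (Suc i)"
  unfolding Op_def by (simp add: conv_commute_op)

lemma Op_G: "conv G (Op w j i) = Op w (Suc j) i"
  unfolding Op_def by simp

definition "Gam w n t = (\<Sum>k<n. of_nat (n choose Suc k) * Op w (Suc k) (n - Suc k) t)"

lemma Gam_measurable[measurable]: "w \<in> borel_measurable borel \<Longrightarrow> Gam w n \<in> borel_measurable borel"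
  unfolding Gam_def[abs_def] by measurable

lemma Gam_Suc:
  assumes [measurable]: "w \<in> borel_measurable borel"
  shows "Gam w (Suc n) t = conv H (Gam w n) t + conv G (Gam w n) t + conv G ((conv H ^^ n) w) t"
proof -
  have cH: "conv H (Gam w n) t = (\<Sum>k<n. of_nat (n choose Suc k) * Op w (Suc k) (Suc n - Suc k) t)"
  proof -
    have "conv H (Gam w n) t = (\<Sum>k<n. of_nat (n choose Suc k) * conv H (Op w (Suc k) (n - Suc k)) t)"
      unfolding Gam_def by (rule conv_sum_right) measurable
    also have "\<dots> = (\<Sum>k<n. of_nat (n choose Suc k) * Op w (Suc k) (Suc n - Suc k) t)"
    proof (intro sum.cong refl)
      fix k assume "k \<in> {..<n}"
      then have "Suc n - Suc k = Suc (n - Suc k)" by auto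
      then show "of_nat (n choose Suc k) * conv H (Op w (Suc k) (n - Suc k)) t =
          of_nat (n choose Suc k) * Op w (Suc k) (Suc n - Suc k) t"
        by (simp add: Op_H)
    qed
    finally show ?thesis .
  qed
  have cG: "conv G (Gam w n) t = (\<Sum>k<n. of_nat (n choose Suc k) * Op w (Suc (Suc k)) (n - Suc k) t)"
    unfolding Gam_def by (subst conv_sum_right) (auto simp: Op_G)
  have cG0: "conv G ((conv H ^^ n) w) t = Op w (Suc 0) n t"
    by (simp add: Op_def)
  have "Gam w (Suc n) t = (\<Sum>k<Suc n. of_nat ((n choose k) + (n choose Suc k)) * Op w (Suc k) (Suc n - Suc k) t)"
    unfolding Gam_def by simp
  also have "\<dots> = (\<Sum>k<Suc n. of_nat (n choose k) * Op w (Suc k) (Suc n - Suc k) t)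
      + (\<Sum>k<Suc n. of_nat (n choose Suc k) * Op w (Suc k) (Suc n - Suc k) t)"
    by (simp add: distrib_right sum.distrib)
  also have "(\<Sum>k<Suc n. of_nat (n choose Suc k) * Op w (Suc k) (Suc n - Suc k) t)
      = conv H (Gam w n) t"
    unfolding cH by simp
  also have "(\<Sum>k<Suc n. of_nat (n choose k) * Op w (Suc k) (Suc n - Suc k) t)
      = Op w (Suc 0) n t + conv G (Gam w n) t"
    unfolding cG by (subst sum.lessThan_Suc_shift) simp
  finally show ?thesis unfolding cG0 by (simp add: ac_simps)
qed

end

context ker begin

definition "mm = nat \<lfloor>1 / \<delta>\<rfloor>"

lemma mm_prop: "1 < real (Suc mm) * \<delta>"
proof -
  have "1 / \<delta> < real_of_int \<lfloor>1 / \<delta>\<rfloor> + 1" by linarith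
  moreover have "real_of_int \<lfloor>1 / \<delta>\<rfloor> = real mm"
    using \<delta>_pos unfolding mm_def by simp
  ultimately have "1 / \<delta> < real (Suc mm)" by simp
  then show ?thesis using \<delta>_pos by (simp add: field_simps)
qed

lemma cpow_zero: "y \<le> 0 \<Longrightarrow> cpow H k y = 0"
  using cpow_upper[of k y] by (simp add: pw_def)

lemma Hpow_zero:
  assumes [measurable]: "w \<in> borel_measurable borel" and w0: "\<And>s. s < 0 \<Longrightarrow> w s = 0"
  shows "s < 0 \<Longrightarrow> (conv H ^^ i) w s = 0"
proof (cases i)
  case 0 then show "s < 0 \<Longrightarrow> ?thesis" using w0 by simp
next
  case (Suc k)
  assume "s < 0"
  have "(conv H ^^ i) w s = conv (cpow H k) w s" unfolding Suc by (simp add: funpow_conv del: funpow.simps)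
  also have "\<dots> = 0" using \<open>s < 0\<close> w0 by (intro conv_zero_left cpow_zero) auto
  finally show ?thesis .
qed

lemma Gam_bound:
  assumes [measurable]: "w \<in> borel_measurable borel" and w0: "\<And>s. s < 0 \<Longrightarrow> w s = 0"
    and t: "t \<le> 1" and n: "n > mm" "real (n - mm) * q \<ge> 1"
  shows "Gam w n t \<le> (\<Sum>k<mm. of_nat (n choose Suc k) * (Gn ^ Suc k * (ennreal (Bd (n - Suc k)) * (\<integral>\<^sup>+x. w x \<partial>lborel))))"
proof -
  have split: "{..<n} = {..<mm} \<union> {mm..<n}" using n by auto
  have z: "Op w (Suc k) (n - Suc k) t = 0" if "k \<in> {mm..<n}" for k
    unfolding Op_def
  proof (rule G_shift_zero[where T=0])
    show "(conv H ^^ (n - Suc k)) w s = 0" if "s < 0" for s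
      using Hpow_zero[OF assms(1) w0 that] .
    have "real (Suc mm) * \<delta> \<le> real (Suc k) * \<delta>" using that \<delta>_pos by (intro mult_right_mono) auto
    then show "t < 0 + real (Suc k) * \<delta>" using mm_prop t by linarith
  qed
  have b: "Op w (Suc k) (n - Suc k) t \<le> Gn ^ Suc k * (ennreal (Bd (n - Suc k)) * (\<integral>\<^sup>+x. w x \<partial>lborel))"
    if "k \<in> {..<mm}" for k
    unfolding Op_def
  proof (rule G_shift_bound[where T="1 - real (Suc k) * \<delta>"])
    fix s assume s: "s \<le> 1 - real (Suc k) * \<delta>"
    have "real (Suc 0) * \<delta> \<le> real (Suc k) * \<delta>" using \<delta>_pos by (intro mult_right_mono) auto
    then have s': "s \<le> 1 - \<delta>" using s by simp
    have i1: "n - Suc k \<ge> 1" using that n by auto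
    have "real (n - mm) * q \<le> real (n - Suc k) * q" using that n q_pos by (intro mult_right_mono) auto
    then have i2: "real (n - Suc k) * q \<ge> 1" using n by linarith
    show "(conv H ^^ (n - Suc k)) w s \<le> ennreal (Bd (n - Suc k)) * (\<integral>\<^sup>+x. w x \<partial>lborel)"
      by (rule H_pow_bound[OF assms(1) w0 i1 i2 s'])
  next
    show "t \<le> 1 - real (Suc k) * \<delta> + real (Suc k) * \<delta>" using t by simp
  qed measurable
  have "Gam w n t = (\<Sum>k<mm. of_nat (n choose Suc k) * Op w (Suc k) (n - Suc k) t)
      + (\<Sum>k\<in>{mm..<n}. of_nat (n choose Suc k) * Op w (Suc k) (n - Suc k) t)"
    unfolding Gam_def split by (rule sum.union_disjoint) auto
  also have "(\<Sum>k\<in>{mm..<n}. of_nat (n choose Suc k) * Op w (Suc k) (n - Suc k) t) = 0"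
    using z by simp
  also have "(\<Sum>k<mm. of_nat (n choose Suc k) * Op w (Suc k) (n - Suc k) t) \<le>
      (\<Sum>k<mm. of_nat (n choose Suc k) * (Gn ^ Suc k * (ennreal (Bd (n - Suc k)) * (\<integral>\<^sup>+x. w x \<partial>lborel))))"
    by (intro sum_mono mult_left_mono b) auto
  finally show ?thesis by simp
qed

end

definition VR :: "(real \<Rightarrow> real) \<Rightarrow> (real \<Rightarrow> real) \<Rightarrow> real \<Rightarrow> real" where
  "VR f w t = indicator {0..1} t * (\<integral>s. f (t - s) * w s \<partial>lborel)"

lemma VR_measurable[measurable]:
  assumes [measurable]: "f \<in> borel_measurable borel" "w \<in> borel_measurable borel"
  shows "VR f w \<in> borel_measurable borel"
  unfolding VR_def[abs_def] by measurable

lemma VR_pow_measurable[measurable]: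
  assumes [measurable]: "f \<in> borel_measurable borel" "w \<in> borel_measurable borel"
  shows "(VR f ^^ n) w \<in> borel_measurable borel"
  by (induction n) auto

lemma integral_abs_ennreal:
  fixes F :: "'a \<Rightarrow> real"
  shows "ennreal \<bar>integral\<^sup>L M F\<bar> \<le> (\<integral>\<^sup>+x. ennreal \<bar>F x\<bar> \<partial>M)"
proof (cases "integrable M F")
  case True
  then show ?thesis using integral_norm_bound_ennreal[OF True] by simp
qed (simp add: not_integrable_integral_eq)

lemma VR_bound:
  "ennreal \<bar>VR f w t\<bar> \<le> conv (\<lambda>x. ennreal \<bar>f x\<bar>) (\<lambda>x. ennreal \<bar>w x\<bar>) t"
proof (cases "t \<in> {0..1}")
  case True
  have "ennreal \<bar>VR f w t\<bar> = ennreal \<bar>\<integral>s. f (t - s) * w s \<partial>lborel\<bar>"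
    using True by (simp add: VR_def)
  also have "\<dots> \<le> (\<integral>\<^sup>+s. ennreal \<bar>f (t - s) * w s\<bar> \<partial>lborel)" by (rule integral_abs_ennreal)
  also have "\<dots> = conv (\<lambda>x. ennreal \<bar>f x\<bar>) (\<lambda>x. ennreal \<bar>w x\<bar>) t"
    unfolding conv_def by (simp add: abs_mult ennreal_mult)
  finally show ?thesis .
qed (simp add: VR_def)

lemma nn_integral_conv3:
  assumes [measurable]: "F1 \<in> borel_measurable borel" "F2 \<in> borel_measurable borel" "F3 \<in> borel_measurable borel"
    "v \<in> borel_measurable borel" "w \<in> borel_measurable borel"
  shows "(\<integral>\<^sup>+s. (F1 (t - s) + F2 (t - s)) * v s + F3 (t - s) * w s \<partial>lborel) = conv F1 v t + conv F2 v t + conv F3 w t"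
  unfolding conv_def by (simp add: distrib_right nn_integral_add)

lemma VR_zero: "t \<notin> {0..1} \<Longrightarrow> VR f w t = 0" by (simp add: VR_def)

context ker begin

definition "K x = ennreal \<bar>kb x\<bar>"
lemma K_meas[measurable]: "K \<in> borel_measurable borel" unfolding K_def[abs_def] by measurable

lemma abs_hb: "ennreal \<bar>hb x\<bar> = H x" using hb_nonneg by (simp add: H_def)

lemma K_le: "K x \<le> H x + G x"
proof -
  have "\<bar>kb x\<bar> \<le> hb x + \<bar>kb x - hb x\<bar>" using abs_triangle_ineq[of "hb x" "kb x - hb x"] hb_nonneg[of x] by simp
  then have "ennreal \<bar>kb x\<bar> \<le> ennreal (hb x + \<bar>kb x - hb x\<bar>)" by (rule ennreal_leI)
  also have "\<dots> = H x + G x" using hb_nonneg by (simp add: H_def G_def ennreal_plus)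
  finally show ?thesis by (simp add: K_def)
qed

lemma bn_bound:
  "ennreal \<bar>(VR hb ^^ n) u t\<bar> \<le> (conv H ^^ n) (\<lambda>x. ennreal \<bar>u x\<bar>) t"
proof (induction n arbitrary: t)
  case 0 then show ?case by simp
next
  case (Suc n)
  have "ennreal \<bar>(VR hb ^^ Suc n) u t\<bar> \<le> conv (\<lambda>x. ennreal \<bar>hb x\<bar>) (\<lambda>x. ennreal \<bar>(VR hb ^^ n) u x\<bar>) t"
    by (simp add: VR_bound)
  also have "\<dots> \<le> conv H ((conv H ^^ n) (\<lambda>x. ennreal \<bar>u x\<bar>)) t"
    by (intro conv_mono Suc.IH) (simp add: abs_hb)
  finally show ?case by simp
qed

lemma an_bound:
  "ennreal \<bar>(VR kb ^^ n) u t\<bar> \<le> (conv K ^^ n) (\<lambda>x. ennreal \<bar>u x\<bar>) t"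
proof (induction n arbitrary: t)
  case 0 then show ?case by simp
next
  case (Suc n)
  have "ennreal \<bar>(VR kb ^^ Suc n) u t\<bar> \<le> conv (\<lambda>x. ennreal \<bar>kb x\<bar>) (\<lambda>x. ennreal \<bar>(VR kb ^^ n) u x\<bar>) t"
    by (simp add: VR_bound)
  also have "\<dots> \<le> conv K ((conv K ^^ n) (\<lambda>x. ennreal \<bar>u x\<bar>)) t"
    by (intro conv_mono Suc.IH) (simp add: K_def)
  finally show ?case by simp
qed

lemma H_int: "(\<integral>\<^sup>+x. H x \<partial>lborel) < \<infinity>" using hint by (simp add: abs_hb)
lemma K_int: "(\<integral>\<^sup>+x. K x \<partial>lborel) < \<infinity>" using kint by (simp add: K_def)

lemma AE_finite:
  assumes [measurable]: "F \<in> borel_measurable borel" "W \<in> borel_measurable borel"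
    and "(\<integral>\<^sup>+x. F x \<partial>lborel) < \<infinity>" "(\<integral>\<^sup>+x. W x \<partial>lborel) < \<infinity>"
  shows "AE t in lborel. (conv F ^^ n) W t \<noteq> \<infinity>"
proof (rule nn_integral_PInf_AE)
  show "(\<integral>\<^sup>+t. (conv F ^^ n) W t \<partial>lborel) \<noteq> \<infinity>"
    using assms(3,4) by (simp add: funpow_conv_integral ennreal_mult_eq_top_iff power_eq_top_ennreal top.not_eq_extremum)
qed measurable

lemma diff_AE:
  assumes [measurable]: "u \<in> borel_measurable borel"
    and uint: "(\<integral>\<^sup>+x. ennreal \<bar>u x\<bar> \<partial>lborel) < \<infinity>"
  shows "AE t in lborel. ennreal \<bar>(VR kb ^^ n) u t - (VR hb ^^ n) u t\<bar> \<le> Gam (\<lambda>x. ennreal \<bar>u x\<bar>) n t"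
proof (induction n)
  case 0 then show ?case by simp
next
  case (Suc n)
  let ?W = "\<lambda>x. ennreal \<bar>u x\<bar>"
  let ?a = "(VR kb ^^ n) u" and ?b = "(VR hb ^^ n) u"
  have [measurable]: "?a \<in> borel_measurable borel" "?b \<in> borel_measurable borel"
    by (rule VR_pow_measurable; simp)+
  have fa: "AE t in lborel. (conv K ^^ Suc n) ?W t \<noteq> \<infinity>"
    by (rule AE_finite) (use K_int uint in auto)
  have fb: "AE t in lborel. (conv H ^^ Suc n) ?W t \<noteq> \<infinity>"
    by (rule AE_finite) (use H_int uint in auto)
  show ?case using fa fb
  proof eventually_elim
    case (elim t)
    show ?case
    proof (cases "t \<in> {0..1}")
      case False then show ?thesis by (simp add: VR_zero)
    next
      case True
      have ia: "integrable lborel (\<lambda>s. kb (t - s) * ?a s)"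
      proof (rule integrableI_bounded)
        have "(\<integral>\<^sup>+s. ennreal (norm (kb (t - s) * ?a s)) \<partial>lborel) \<le> (\<integral>\<^sup>+s. K (t - s) * (conv K ^^ n) ?W s \<partial>lborel)"
        proof (intro nn_integral_mono)
          fix s
          have "ennreal (norm (kb (t - s) * ?a s)) = K (t - s) * ennreal \<bar>?a s\<bar>" by (simp add: K_def abs_mult ennreal_mult)
          also have "\<dots> \<le> K (t - s) * (conv K ^^ n) ?W s" by (intro mult_left_mono an_bound) auto
          finally show "ennreal (norm (kb (t - s) * ?a s)) \<le> K (t - s) * (conv K ^^ n) ?W s" .
        qed
        also have "\<dots> = conv K ((conv K ^^ n) ?W) t" by (rule conv_def[symmetric])
        also have "\<dots> < \<infinity>" using elim(1) by (simp add: top.not_eq_extremum)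
        finally show "(\<integral>\<^sup>+s. ennreal (norm (kb (t - s) * ?a s)) \<partial>lborel) < \<infinity>" .
      qed measurable
      have ib: "integrable lborel (\<lambda>s. hb (t - s) * ?b s)"
      proof (rule integrableI_bounded)
        have "(\<integral>\<^sup>+s. ennreal (norm (hb (t - s) * ?b s)) \<partial>lborel) \<le> (\<integral>\<^sup>+s. H (t - s) * (conv H ^^ n) ?W s \<partial>lborel)"
        proof (intro nn_integral_mono)
          fix s
          have "ennreal (norm (hb (t - s) * ?b s)) = H (t - s) * ennreal \<bar>?b s\<bar>" by (simp add: abs_hb[symmetric] abs_mult ennreal_mult)
          also have "\<dots> \<le> H (t - s) * (conv H ^^ n) ?W s" by (intro mult_left_mono bn_bound) auto
          finally show "ennreal (norm (hb (t - s) * ?b s)) \<le> H (t - s) * (conv H ^^ n) ?W s" .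
        qed
        also have "\<dots> = conv H ((conv H ^^ n) ?W) t" by (rule conv_def[symmetric])
        also have "\<dots> < \<infinity>" using elim(2) by (simp add: top.not_eq_extremum)
        finally show "(\<integral>\<^sup>+s. ennreal (norm (hb (t - s) * ?b s)) \<partial>lborel) < \<infinity>" .
      qed measurable
      have "(VR kb ^^ Suc n) u t - (VR hb ^^ Suc n) u t =
          (\<integral>s. kb (t - s) * ?a s \<partial>lborel) - (\<integral>s. hb (t - s) * ?b s \<partial>lborel)"
        using True by (simp add: VR_def)
      also have "\<dots> = (\<integral>s. kb (t - s) * ?a s - hb (t - s) * ?b s \<partial>lborel)"
        using ia ib by simp
      finally have eq: "(VR kb ^^ Suc n) u t - (VR hb ^^ Suc n) u t = (\<integral>s. kb (t - s) * ?a s - hb (t - s) * ?b s \<partial>lborel)" .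
      have "ennreal \<bar>(VR kb ^^ Suc n) u t - (VR hb ^^ Suc n) u t\<bar> \<le>
          (\<integral>\<^sup>+s. ennreal \<bar>kb (t - s) * ?a s - hb (t - s) * ?b s\<bar> \<partial>lborel)"
        unfolding eq by (rule integral_abs_ennreal)
      also have "\<dots> \<le> (\<integral>\<^sup>+s. (H (t - s) + G (t - s)) * Gam ?W n s + G (t - s) * (conv H ^^ n) ?W s \<partial>lborel)"
      proof (rule nn_integral_mono_AE)
        show "AE s in lborel. ennreal \<bar>kb (t - s) * ?a s - hb (t - s) * ?b s\<bar> \<le>
            (H (t - s) + G (t - s)) * Gam ?W n s + G (t - s) * (conv H ^^ n) ?W s"
          using Suc.IH
        proof eventually_elim
          case (elim s)
          have e: "kb (t - s) * ?a s - hb (t - s) * ?b s = kb (t - s) * (?a s - ?b s) + (kb (t - s) - hb (t - s)) * ?b s"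
            by (simp add: algebra_simps)
          have "ennreal \<bar>kb (t - s) * ?a s - hb (t - s) * ?b s\<bar> \<le>
              ennreal (\<bar>kb (t - s)\<bar> * \<bar>?a s - ?b s\<bar> + \<bar>kb (t - s) - hb (t - s)\<bar> * \<bar>?b s\<bar>)"
            unfolding e by (intro ennreal_leI) (simp add: abs_mult[symmetric] abs_triangle_ineq)
          also have "\<dots> = K (t - s) * ennreal \<bar>?a s - ?b s\<bar> + G (t - s) * ennreal \<bar>?b s\<bar>"
            by (simp add: K_def G_def ennreal_plus ennreal_mult)
          also have "\<dots> \<le> (H (t - s) + G (t - s)) * Gam ?W n s + G (t - s) * (conv H ^^ n) ?W s"
            by (intro add_mono mult_mono K_le elim bn_bound) auto
          finally show ?case .
        qed
      qed
      also have "\<dots> = conv H (Gam ?W n) t + conv G (Gam ?W n) t + conv G ((conv H ^^ n) ?W) t"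
        by (rule nn_integral_conv3) measurable
      also have "\<dots> = Gam ?W (Suc n) t" by (simp add: Gam_Suc)
      finally show ?thesis .
    qed
  qed
qed

end

abbreviation "L01 \<equiv> lebesgue_on {0..1::real}"

lemma nn_on01: "(\<integral>\<^sup>+x. f x \<partial>L01) = (\<integral>\<^sup>+x. f x * indicator {0..1} x \<partial>lborel)"
  by (simp add: nn_integral_restrict_space nn_integral_completion)

lemma space_L01[simp]: "space L01 = {0..1}" by (simp add: space_restrict_space)

lemma emeasure_L01: "emeasure L01 {0..1} = 1"
  by (simp add: emeasure_restrict_space emeasure_completion)

lemma nn_const_L01: "(\<integral>\<^sup>+x. ennreal a \<partial>L01) = ennreal a"
  using emeasure_L01 by simp

lemma AE_L01_from_lborel: "(AE x in lborel. P x) \<Longrightarrow> AE x in L01. P x"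
  by (subst AE_restrict_space_iff) (auto intro: AE_completion elim: eventually_mono)

lemma Lp_norm_cong:
  assumes "\<And>t. t \<in> {0..1} \<Longrightarrow> F t = F' t"
  shows "Lp_norm p F = Lp_norm p F'"
proof -
  have i: "(\<integral>\<^sup>+ x. ennreal (\<bar>F x\<bar> powr real_of_ereal p) \<partial>L01) = (\<integral>\<^sup>+ x. ennreal (\<bar>F' x\<bar> powr real_of_ereal p) \<partial>L01)"
    by (intro nn_integral_cong) (simp add: assms)
  have "esssup L01 (\<lambda>x. ereal \<bar>F x\<bar>) = esssup L01 (\<lambda>x. ereal \<bar>F' x\<bar>)"
  proof (cases "(\<lambda>x. ereal \<bar>F x\<bar>) \<in> borel_measurable L01")
    case True
    moreover have m: "(\<lambda>x. ereal \<bar>F x\<bar>) \<in> borel_measurable L01 \<longleftrightarrow> (\<lambda>x. ereal \<bar>F' x\<bar>) \<in> borel_measurable L01"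
      by (intro measurable_cong) (simp add: assms)
    ultimately show ?thesis by (intro esssup_AE_cong) (auto simp: assms intro!: AE_I2)
  next
    case False
    moreover have m: "(\<lambda>x. ereal \<bar>F x\<bar>) \<in> borel_measurable L01 \<longleftrightarrow> (\<lambda>x. ereal \<bar>F' x\<bar>) \<in> borel_measurable L01"
      by (intro measurable_cong) (simp add: assms)
    ultimately show ?thesis by (simp add: esssup_non_measurable)
  qed
  then show ?thesis unfolding Lp_norm_def i by simp
qed

lemma Lp_norm_nonneg: "Lp_norm p F \<ge> 0"
proof -
  have "esssup L01 (\<lambda>x. ereal \<bar>F x\<bar>) \<ge> 0"
  proof (cases "(\<lambda>x. ereal \<bar>F x\<bar>) \<in> borel_measurable L01")
    case True
    have "esssup L01 (\<lambda>x. 0::ereal) \<le> esssup L01 (\<lambda>x. ereal \<bar>F x\<bar>)"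
      by (intro esssup_mono) auto
    moreover have "esssup L01 (\<lambda>x. 0::ereal) = 0"
      by (rule esssup_const) (simp add: emeasure_restrict_space)
    ultimately show ?thesis by simp
  qed (simp add: esssup_non_measurable)
  then show ?thesis unfolding Lp_norm_def by (auto intro: real_of_ereal_pos)
qed

lemma Lp_upper:
  assumes p: "1 \<le> p" and U: "0 \<le> U" and ae: "AE t in L01. \<bar>F t\<bar> \<le> U"
  shows "Lp_norm p F \<le> U"
proof (cases "p = \<infinity>")
  case True
  show ?thesis
  proof (cases "(\<lambda>x. ereal \<bar>F x\<bar>) \<in> borel_measurable L01")
    case m: True
    have "esssup L01 (\<lambda>x. ereal \<bar>F x\<bar>) \<le> ereal U"
      by (rule esssup_I[OF m]) (use ae in \<open>auto elim: eventually_mono\<close>)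
    then have "real_of_ereal (esssup L01 (\<lambda>x. ereal \<bar>F x\<bar>)) \<le> U"
      using U by (cases "esssup L01 (\<lambda>x. ereal \<bar>F x\<bar>)") auto
    then show ?thesis using True by (simp add: Lp_norm_def)
  next
    case False
    then show ?thesis using True U by (simp add: Lp_norm_def esssup_non_measurable top_ereal_def)
  qed
next
  case False
  define P where "P = real_of_ereal p"
  have P: "1 \<le> P" using p False unfolding P_def by (cases p) auto
  have "(\<integral>\<^sup>+x. ennreal (\<bar>F x\<bar> powr P) \<partial>L01) \<le> (\<integral>\<^sup>+x. ennreal (U powr P) \<partial>L01)"
    by (intro nn_integral_mono_AE) (use ae P in \<open>auto intro!: ennreal_leI powr_mono2 elim!: eventually_mono\<close>)
  also have "\<dots> = ennreal (U powr P)" by (rule nn_const_L01)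
  finally have "enn2real (\<integral>\<^sup>+x. ennreal (\<bar>F x\<bar> powr P) \<partial>L01) \<le> U powr P"
    by (intro enn2real_leI) auto
  then have "(enn2real (\<integral>\<^sup>+x. ennreal (\<bar>F x\<bar> powr P) \<partial>L01)) powr (1 / P) \<le> (U powr P) powr (1 / P)"
    using P by (intro powr_mono2) auto
  also have "\<dots> = U" using P U by (simp add: powr_powr)
  finally show ?thesis using False by (simp add: Lp_norm_def P_def)
qed

lemma young_pt:
  fixes P N a :: real
  assumes P: "P > 1" and N: "N > 0" and a: "a \<ge> 0"
  shows "a \<le> N / P / N powr P * a powr P + N * (1 - 1 / P)"
proof -
  define Q where "Q = P / (P - 1)"
  have Q: "Q > 1" "1 / P + 1 / Q = 1" using P unfolding Q_def by (auto simp: field_simps)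
  have "(a / N) * 1 \<le> (a / N) powr P / P + 1 powr Q / Q"
    using Youngs_inequality[OF P Q(1) Q(2), of "a / N" 1] a N by simp
  then have "a / N \<le> (a powr P / N powr P) / P + 1 / Q"
    using a N by (simp add: powr_divide)
  then have "N * (a / N) \<le> N * ((a powr P / N powr P) / P + 1 / Q)"
    using N by (intro mult_left_mono) auto
  moreover have "1 / Q = 1 - 1 / P" using Q(2) by simp
  ultimately show ?thesis using N by (simp add: field_simps)
qed

lemma Lp_lower:
  assumes p: "1 \<le> p" and m: "F \<in> borel_measurable L01" and inLp: "in_Lp p F"
  shows "(\<integral>\<^sup>+x. ennreal \<bar>F x\<bar> \<partial>L01) \<le> ennreal (Lp_norm p F)"
proof (cases "p = \<infinity>")
  case True
  define e where "e = esssup L01 (\<lambda>x. ereal \<bar>F x\<bar>)"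
  have e: "e < \<infinity>" using inLp True by (simp add: in_Lp_def e_def)
  have "AE x in L01. ereal \<bar>F x\<bar> \<le> e" unfolding e_def by (rule esssup_AE)
  then have "AE x in L01. \<bar>F x\<bar> \<le> real_of_ereal e"
  proof (rule eventually_mono)
    fix x assume "ereal \<bar>F x\<bar> \<le> e"
    then show "\<bar>F x\<bar> \<le> real_of_ereal e" using e by (cases e) auto
  qed
  then have "(\<integral>\<^sup>+x. ennreal \<bar>F x\<bar> \<partial>L01) \<le> (\<integral>\<^sup>+x. ennreal (real_of_ereal e) \<partial>L01)"
    by (intro nn_integral_mono_AE) (auto elim!: eventually_mono intro: ennreal_leI)
  also have "\<dots> = ennreal (Lp_norm p F)" using True by (simp add: nn_const_L01 Lp_norm_def e_def emeasure_L01)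
  finally show ?thesis .
next
  case False
  define P where "P = real_of_ereal p"
  have P: "1 \<le> P" using p False unfolding P_def by (cases p) auto
  define I where "I = (\<integral>\<^sup>+x. ennreal (\<bar>F x\<bar> powr P) \<partial>L01)"
  have I: "I < \<infinity>" using inLp False by (simp add: in_Lp_def I_def P_def)
  have LN: "Lp_norm p F = enn2real I powr (1 / P)" using False by (simp add: Lp_norm_def I_def P_def)
  have [measurable]: "F \<in> borel_measurable L01" by (rule m)
  show ?thesis
  proof (cases "P = 1")
    case True
    have "(\<integral>\<^sup>+x. ennreal \<bar>F x\<bar> \<partial>L01) = I" unfolding I_def True by simp
    also have "\<dots> = ennreal (enn2real I)" using I by (simp add: less_top[symmetric])
    also have "\<dots> = ennreal (Lp_norm p F)" unfolding LN True by simp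
    finally show ?thesis by simp
  next
    case False
    then have P1: "P > 1" using P by simp
    show ?thesis
    proof (cases "enn2real I = 0")
      case True
      then have "I = 0" using I by (auto simp: enn2real_eq_0_iff)
      then have "AE x in L01. ennreal (\<bar>F x\<bar> powr P) = 0"
        unfolding I_def by (subst (asm) nn_integral_0_iff_AE) auto
      then have "AE x in L01. ennreal \<bar>F x\<bar> = 0"
        by (rule eventually_mono) (use P in auto)
      then have "(\<integral>\<^sup>+x. ennreal \<bar>F x\<bar> \<partial>L01) = 0"
        by (subst nn_integral_0_iff_AE) auto
      then show ?thesis by simp
    next
      case False
      define N where "N = enn2real I powr (1 / P)"
      have I0: "enn2real I > 0" using False by (simp add: enn2real_nonneg less_le)
      have N: "N > 0" using I0 by (simp add: N_def)
      have NP: "N powr P = enn2real I" using I0 P by (simp add: N_def powr_powr)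
      have Ie: "I = ennreal (N powr P)" using I NP by (simp add: less_top[symmetric])
      have "(\<integral>\<^sup>+x. ennreal \<bar>F x\<bar> \<partial>L01) \<le>
          (\<integral>\<^sup>+x. ennreal (N / P / N powr P) * ennreal (\<bar>F x\<bar> powr P) + ennreal (N * (1 - 1 / P)) \<partial>L01)"
      proof (intro nn_integral_mono)
        fix x
        have "\<bar>F x\<bar> \<le> N / P / N powr P * \<bar>F x\<bar> powr P + N * (1 - 1 / P)"
          by (rule young_pt[OF P1 N]) simp
        then have "ennreal \<bar>F x\<bar> \<le> ennreal (N / P / N powr P * \<bar>F x\<bar> powr P + N * (1 - 1 / P))"
          by (rule ennreal_leI)
        also have "\<dots> = ennreal (N / P / N powr P) * ennreal (\<bar>F x\<bar> powr P) + ennreal (N * (1 - 1 / P))"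
        proof -
          have nn: "0 \<le> N / P / N powr P" "0 \<le> \<bar>F x\<bar> powr P" "0 \<le> N * (1 - 1 / P)"
            using N P1 by auto
          show ?thesis
            by (simp only: ennreal_plus[OF mult_nonneg_nonneg[OF nn(1) nn(2)] nn(3)] ennreal_mult[OF nn(1) nn(2)])
        qed
        finally show "ennreal \<bar>F x\<bar> \<le> ennreal (N / P / N powr P) * ennreal (\<bar>F x\<bar> powr P) + ennreal (N * (1 - 1 / P))" .
      qed
      also have "\<dots> = ennreal (N / P / N powr P) * I + ennreal (N * (1 - 1 / P))"
        unfolding I_def by (subst nn_integral_add) (auto simp: nn_integral_cmult nn_const_L01 emeasure_L01)
      also have "\<dots> = ennreal (N / P / N powr P * N powr P + N * (1 - 1 / P))"
      proof -
        have nn: "0 \<le> N / P / N powr P" "0 \<le> N powr P" "0 \<le> N * (1 - 1 / P)"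
          using N P1 by auto
        show ?thesis unfolding Ie
          by (simp only: ennreal_plus[OF mult_nonneg_nonneg[OF nn(1) nn(2)] nn(3)] ennreal_mult[OF nn(1) nn(2)])
      qed
      also have "N / P / N powr P * N powr P + N * (1 - 1 / P) = N"
        using N P1 by (simp add: field_simps)
      finally show ?thesis by (simp add: LN N_def)
    qed
  qed
qed

lemma borel_L01[measurable (raw)]:
  "f \<in> borel_measurable borel \<Longrightarrow> f \<in> borel_measurable L01"
  by (intro measurable_restrict_space1 measurable_completion) (simp add: measurable_lborel1)

lemma in_Lp_bounded:
  assumes p: "1 \<le> p" and m: "F \<in> borel_measurable L01" and B: "\<And>t. t \<in> {0..1} \<Longrightarrow> \<bar>F t\<bar> \<le> B"
  shows "in_Lp p F"
proof (cases "p = \<infinity>")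
  case True
  have "esssup L01 (\<lambda>x. ereal \<bar>F x\<bar>) \<le> ereal B"
    by (rule esssup_I) (use m B in \<open>auto intro!: AE_I2\<close>)
  then show ?thesis using True m by (auto simp: in_Lp_def)
next
  case False
  define P where "P = real_of_ereal p"
  have P: "1 \<le> P" using p False unfolding P_def by (cases p) auto
  have B0: "0 \<le> B" using B[of 0] by auto
  have "(\<integral>\<^sup>+x. ennreal (\<bar>F x\<bar> powr P) \<partial>L01) \<le> (\<integral>\<^sup>+x. ennreal (B powr P) \<partial>L01)"
    by (intro nn_integral_mono) (use B P in \<open>auto intro!: ennreal_leI powr_mono2\<close>)
  also have "\<dots> < \<infinity>" by (simp add: nn_const_L01 emeasure_L01)
  finally show ?thesis using False m by (simp add: in_Lp_def P_def)
qed

lemma Beta_1: "x > 0 \<Longrightarrow> Beta 1 x = 1 / (x::real)"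
proof -
  assume x: "x > 0"
  have "x \<notin> \<int>\<^sub>\<le>\<^sub>0" using x nonpos_Ints_nonpos by force
  then have "Gamma (1 + x) = x * Gamma x" using Gamma_plus1[of x] by (simp add: add.commute)
  moreover have "Gamma x > 0" using x by (simp add: Gamma_real_pos_exp)
  ultimately show ?thesis by (simp add: Beta_def)
qed

lemma nn_powr01:
  assumes "a > -1"
  shows "(\<integral>\<^sup>+t. ennreal (t powr a) \<partial>L01) = ennreal (1 / (a + 1))"
proof -
  have "((\<lambda>x. x powr a) has_integral (1 powr (a+1) / (a+1))) {0..1}"
    by (rule has_integral_powr_from_0) (use assms in auto)
  then have "integral\<^sup>N lborel (\<lambda>x. indicator {0..1} x * x powr a) = ennreal (1 / (a + 1))"
    by (subst nn_integral_has_integral_lebesgue) auto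
  moreover have "(\<integral>\<^sup>+t. ennreal (t powr a) \<partial>L01) = integral\<^sup>N lborel (\<lambda>x. indicator {0..1} x * x powr a)"
    unfolding nn_on01 by (intro nn_integral_cong) (auto simp: indicator_def)
  ultimately show ?thesis by simp
qed

context ker begin

definition "W0 x = ennreal (indicator {0..1::real} x)"
lemma W0_meas[measurable]: "W0 \<in> borel_measurable borel" unfolding W0_def[abs_def] by measurable
definition "Hn = (\<integral>\<^sup>+x. H x \<partial>lborel)"

lemma W0_le: "W0 x \<le> 1" by (simp add: W0_def indicator_def)
lemma W0_zero: "x < 0 \<Longrightarrow> W0 x = 0" by (simp add: W0_def)

lemma convH_bdd: "(conv H ^^ n) W0 t \<le> Hn ^ n"
proof (induction n arbitrary: t)
  case 0 then show ?case using W0_le by simp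
next
  case (Suc n)
  have "conv H ((conv H ^^ n) W0) t \<le> (\<integral>\<^sup>+x. H x \<partial>lborel) * Hn ^ n"
    by (rule conv_bound_left) (use Suc in auto)
  then show ?case by (simp add: Hn_def[symmetric])
qed

lemma Hn_fin: "Hn < \<infinity>" using H_int by (simp add: Hn_def)

lemma bn_eq:
  "0 \<le> (VR hb ^^ n) (indicator {0..1}) t \<and>
   (t \<in> {0..1} \<longrightarrow> ennreal ((VR hb ^^ n) (indicator {0..1}) t) = (conv H ^^ n) W0 t) \<and>
   (t \<notin> {0..1} \<longrightarrow> (VR hb ^^ n) (indicator {0..1}) t = 0)"
proof (induction n arbitrary: t)
  case 0 then show ?case by (simp add: W0_def)
next
  case (Suc n)
  let ?b = "(VR hb ^^ n) (indicator {0..1})"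
  have [measurable]: "?b \<in> borel_measurable borel" by (rule VR_pow_measurable; simp)
  have pt: "ennreal (hb (t - s) * ?b s) = H (t - s) * (conv H ^^ n) W0 s" if t: "t \<le> 1" for s
  proof (cases "s \<in> {0..1}")
    case True
    have "ennreal (hb (t - s) * ?b s) = H (t - s) * ennreal (?b s)"
      using Suc.IH[of s] hb_nonneg[of "t - s"] by (simp add: H_def ennreal_mult)
    then show ?thesis using Suc.IH[of s] True by simp
  next
    case False
    then have b0: "?b s = 0" using Suc.IH[of s] by auto
    show ?thesis
    proof (cases "s < 0")
      case True then show ?thesis using b0 Hpow_zero[OF W0_meas W0_zero True] by simp
    next
      case False
      then have "t - s \<le> 0" using \<open>s \<notin> {0..1}\<close> t by auto
      then show ?thesis using b0 by (simp add: H_zero)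
    qed
  qed
  show ?case
  proof (cases "t \<in> {0..1}")
    case False then show ?thesis by (auto simp: VR_zero)
  next
    case True
    have "(\<integral>\<^sup>+s. ennreal (hb (t - s) * ?b s) \<partial>lborel) = (\<integral>\<^sup>+s. H (t - s) * (conv H ^^ n) W0 s \<partial>lborel)"
      using True by (intro nn_integral_cong pt) auto
    also have "\<dots> = conv H ((conv H ^^ n) W0) t" by (rule conv_def[symmetric])
    finally have nn: "(\<integral>\<^sup>+s. ennreal (hb (t - s) * ?b s) \<partial>lborel) = conv H ((conv H ^^ n) W0) t" .
    have fin: "conv H ((conv H ^^ n) W0) t < \<infinity>"
    proof -
      have "conv H ((conv H ^^ n) W0) t \<le> Hn ^ Suc n" using convH_bdd[of "Suc n" t] by simp
      also have "\<dots> < \<infinity>" using Hn_fin power_less_top_ennreal[of Hn "Suc n"] by (simp add: infinity_ennreal_def)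
      finally show ?thesis .
    qed
    have nonneg: "0 \<le> hb (t - s) * ?b s" for s using hb_nonneg Suc.IH[of s] by auto
    have int: "integrable lborel (\<lambda>s. hb (t - s) * ?b s)"
    proof (rule integrableI_bounded)
      show "(\<integral>\<^sup>+s. ennreal (norm (hb (t - s) * ?b s)) \<partial>lborel) < \<infinity>"
        using nn fin nonneg by simp
    qed measurable
    have "ennreal ((VR hb ^^ Suc n) (indicator {0..1}) t) = ennreal (\<integral>s. hb (t - s) * ?b s \<partial>lborel)"
      using True by (simp add: VR_def)
    also have "\<dots> = (\<integral>\<^sup>+s. ennreal (hb (t - s) * ?b s) \<partial>lborel)"
      by (rule nn_integral_eq_integral[symmetric]) (use int nonneg in auto)
    finally have e: "ennreal ((VR hb ^^ Suc n) (indicator {0..1}) t) = (conv H ^^ Suc n) W0 t"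
      using nn by simp
    have "0 \<le> (VR hb ^^ Suc n) (indicator {0..1}) t"
      using True nonneg by (simp add: VR_def integral_nonneg)
    then show ?thesis using e True by simp
  qed
qed

end

lemma ennreal_mult4: "0 \<le> a \<Longrightarrow> 0 \<le> b \<Longrightarrow> 0 \<le> c \<Longrightarrow> 0 \<le> d \<Longrightarrow>
  ennreal (a * b * c * d) = ennreal a * ennreal b * ennreal c * ennreal d"
  by (simp add: ennreal_mult mult_nonneg_nonneg)

context ker begin

lemma lower_conv:
  assumes n: "n \<ge> 1" and t: "t \<in> {0..1}"
  shows "ennreal (c ^ n * A (n - 1) * exp (- 2 * \<bar>\<mu>\<bar>) / (real n * q) * t powr (real n * q)) \<le> (conv H ^^ n) W0 t"
proof -
  obtain i where i: "n = Suc i" using n by (cases n) auto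
  let ?C = "c ^ n * A i" and ?E = "exp (- \<bar>\<mu>\<bar>)" and ?b = "real n * q - 1"
  have b: "?b > -1" using q_pos n by simp
  have nq: "real n * q > 0" using q_pos n by simp
  have C0: "?C \<ge> 0" using c_pos A_pos[of i] by simp
  have "ennreal (?C * ?E * (1 / (real n * q)) * ?E * t powr (real n * q))
      \<le> ennreal ?C * ennreal ?E * (ennreal (Beta (0 + 1) (?b + 1)) * pw \<mu> (0 + ?b + 1) t)"
  proof (cases "t > 0")
    case True
    have mt: "- \<bar>\<mu>\<bar> \<le> \<mu> * t"
    proof (cases "\<mu> \<ge> 0")
      case True
      have "0 \<le> \<mu> * t" using True \<open>t > 0\<close> by simp
      then show ?thesis using True by simp
    next
      case False
      have "\<mu> * 1 \<le> \<mu> * t" using False t by (intro mult_left_mono_neg) auto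
      then show ?thesis using False by simp
    qed
    have "?E * t powr (real n * q) \<le> exp (\<mu> * t) * t powr (real n * q)"
      using mt by (intro mult_right_mono) auto
    then have "?C * ?E * (1 / (real n * q)) * (?E * t powr (real n * q)) \<le> ?C * ?E * (1 / (real n * q)) * (exp (\<mu> * t) * t powr (real n * q))"
      using C0 nq by (intro mult_left_mono) auto
    moreover have "Beta (0 + 1) (?b + 1) = 1 / (real n * q)" using nq by (simp add: Beta_1)
    moreover have "pw \<mu> (0 + ?b + 1) t = ennreal (exp (\<mu> * t) * t powr (real n * q))"
      using True by (simp add: pw_def)
    moreover have "ennreal ?C * ennreal ?E * (ennreal (1 / (real n * q)) * ennreal (exp (\<mu> * t) * t powr (real n * q)))
        = ennreal (?C * ?E * (1 / (real n * q)) * (exp (\<mu> * t) * t powr (real n * q)))"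
      unfolding mult.assoc[symmetric, of "ennreal ?C * ennreal ?E"]
      by (rule ennreal_mult4[symmetric]) (use C0 nq in auto)
    ultimately show ?thesis
      by (simp only: mult.assoc[symmetric, of "?C * ?E * (1 / (real n * q))"]) (auto intro!: ennreal_leI)
  next
    case False
    then have "t = 0" using t by auto
    then show ?thesis by simp
  qed
  also have "\<dots> = conv (\<lambda>x. ennreal ?C * pw \<mu> ?b x) (\<lambda>x. ennreal ?E * pw \<mu> 0 x) t"
  proof -
    have cp: "conv (pw \<mu> ?b) (pw \<mu> 0) t = ennreal (Beta (0+1) (?b+1)) * pw \<mu> (0 + ?b + 1) t"
      by (rule conv_pw) (use b in auto)
    show ?thesis unfolding conv_cmult[OF pw_measurable pw_measurable] cp ..
  qed
  also have "\<dots> \<le> conv (cpow H i) W0 t"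
    unfolding conv_def
  proof (intro nn_integral_mono)
    fix s
    show "ennreal ?C * pw \<mu> ?b (t - s) * (ennreal ?E * pw \<mu> 0 s) \<le> cpow H i (t - s) * W0 s"
    proof (cases "0 < s \<and> s < t")
      case True
      have "ennreal ?C * pw \<mu> ?b (t - s) \<le> cpow H i (t - s)"
        using cpow_lower[of "t - s" i] t True i by (simp add: algebra_simps)
      moreover have "ennreal ?E * pw \<mu> 0 s \<le> W0 s"
      proof -
        have "?E * exp (\<mu> * s) \<le> 1"
        proof -
          have "\<mu> * s \<le> \<bar>\<mu>\<bar> * s" using True by (intro mult_right_mono) auto
          also have "\<dots> \<le> \<bar>\<mu>\<bar> * 1" using True t by (intro mult_left_mono) auto
          finally have "\<mu> * s \<le> \<bar>\<mu>\<bar>" by simp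
          then have "- \<bar>\<mu>\<bar> + \<mu> * s \<le> 0" by simp
          then show ?thesis by (simp add: exp_add[symmetric])
        qed
        then show ?thesis using True t by (simp add: pw_def W0_def ennreal_mult'[symmetric])
      qed
      ultimately show ?thesis by (intro mult_mono) auto
    next
      case False
      then have "pw \<mu> ?b (t - s) = 0 \<or> pw \<mu> 0 s = 0" by (auto simp: pw_def)
      then show ?thesis by auto
    qed
  qed
  also have "conv (cpow H i) W0 t = (conv H ^^ n) W0 t" unfolding i by (simp add: funpow_conv del: funpow.simps)
  finally show ?thesis by (simp add: i mult_ac exp_add[symmetric] field_simps)
qed

end

context ker begin


definition "Lc n = c ^ n * A (n - 1) * exp (- 2 * \<bar>\<mu>\<bar>) / (real n * q)"

lemma Lc_pos: "n \<ge> 1 \<Longrightarrow> Lc n > 0"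
  using c_pos A_pos q_pos by (simp add: Lc_def)

lemma bn_lower:
  assumes n: "n \<ge> 1" and t: "t \<in> {0..1}"
  shows "Lc n * t powr (real n * q) \<le> (VR hb ^^ n) (indicator {0..1}) t"
proof -
  have "ennreal (Lc n * t powr (real n * q)) \<le> ennreal ((VR hb ^^ n) (indicator {0..1}) t)"
    using lower_conv[OF n t] bn_eq[of n t] t by (simp add: Lc_def)
  then show ?thesis using bn_eq[of n t] by (simp add: ennreal_le_iff)
qed

lemma bn_meas: "(VR hb ^^ n) (indicator {0..1}) \<in> borel_measurable borel"
  by (rule VR_pow_measurable; simp)

lemma bn_upper: "\<bar>(VR hb ^^ n) (indicator {0..1}) t\<bar> \<le> enn2real (Hn ^ n)"
proof -
  have fin: "Hn ^ n < \<infinity>" using Hn_fin power_less_top_ennreal[of Hn n] by (simp add: infinity_ennreal_def)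
  show ?thesis
  proof (cases "t \<in> {0..1}")
    case True
    have "ennreal ((VR hb ^^ n) (indicator {0..1}) t) \<le> Hn ^ n"
      using bn_eq[of n t] True convH_bdd[of n t] by simp
    then show ?thesis using bn_eq[of n t] fin
      by (simp add: enn2real_leI) (metis enn2real_ennreal enn2real_mono fin infinity_ennreal_def)
  next
    case False then show ?thesis using bn_eq[of n t] by simp
  qed
qed

end

context ker begin
lemma Lp_bn_lower:
  assumes p: "1 \<le> p" and n: "n \<ge> 1"
  shows "Lc n / (real n * q + 1) \<le> Lp_norm p ((VR hb ^^ n) (indicator {0..1}))"
proof -
  let ?b = "(VR hb ^^ n) (indicator {0..1})"
  have m: "?b \<in> borel_measurable L01" using bn_meas by (rule borel_L01)
  have inLp: "in_Lp p ?b" by (rule in_Lp_bounded[OF p m bn_upper])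
  have "ennreal (Lc n / (real n * q + 1)) = ennreal (Lc n) * (\<integral>\<^sup>+t. ennreal (t powr (real n * q)) \<partial>L01)"
  proof -
    have nq: "0 < real n * q" using q_pos n by simp
    then show ?thesis using Lc_pos[OF n] by (subst nn_powr01) (auto simp: ennreal_mult[symmetric])
  qed
  also have "\<dots> = (\<integral>\<^sup>+t. ennreal (Lc n * t powr (real n * q)) \<partial>L01)"
    using Lc_pos[OF n] by (subst nn_integral_cmult[symmetric]) (auto simp: ennreal_mult)
  also have "\<dots> \<le> (\<integral>\<^sup>+t. ennreal \<bar>?b t\<bar> \<partial>L01)"
    by (intro nn_integral_mono ennreal_leI) (use bn_lower[OF n] in \<open>force\<close>)
  also have "\<dots> \<le> ennreal (Lp_norm p ?b)" by (rule Lp_lower[OF p m inLp])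
  finally show ?thesis using Lp_norm_nonneg by (simp add: ennreal_le_iff)
qed

end

context ker begin
lemma H_pow_bound1:
  assumes [measurable]: "w \<in> borel_measurable borel" and w0: "\<And>s. s < 0 \<Longrightarrow> w s = 0"
    and i: "i \<ge> 1" "real i * q \<ge> 1" and s: "s \<le> 1"
  shows "(conv H ^^ i) w s \<le> ennreal (c ^ i * A (i - 1) * exp \<nu>') * (\<integral>\<^sup>+x. w x \<partial>lborel)"
proof -
  obtain k where k: "i = Suc k" using i by (cases i) auto
  have "(conv H ^^ i) w s = conv (cpow H k) w s" unfolding k by (simp add: funpow_conv del: funpow.simps)
  also have "\<dots> \<le> ennreal (c ^ i * A (i - 1) * exp \<nu>') * (\<integral>\<^sup>+x. w x \<partial>lborel)"
  proof (rule conv_bound_right)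
    fix \<sigma>
    show "cpow H k (s - \<sigma>) \<le> ennreal (c ^ i * A (i - 1) * exp \<nu>') \<or> w \<sigma> = 0"
    proof (cases "\<sigma> < 0")
      case True then show ?thesis using w0 by auto
    next
      case False
      have "cpow H k (s - \<sigma>) \<le> ennreal (c ^ (k+1) * A k) * pw \<nu>' (real (k+1) * q - 1) (s - \<sigma>)"
        by (rule cpow_upper)
      also have "\<dots> \<le> ennreal (c ^ (k+1) * A k) * ennreal (exp \<nu>' * 1 powr (real (k+1) * q - 1))"
        using False s i unfolding k by (intro mult_left_mono pw_le_bound) auto
      also have "\<dots> = ennreal (c ^ i * A (i - 1) * exp \<nu>')"
        using c_pos A_pos[of k] unfolding k by (simp add: ennreal_mult[symmetric] mult_ac)
      finally show ?thesis by simp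
    qed
  qed measurable
  finally show ?thesis .
qed

lemma b_upper:
  assumes [measurable]: "u \<in> borel_measurable borel" and u0: "\<And>s. s < 0 \<Longrightarrow> u s = 0"
    and uint: "(\<integral>\<^sup>+x. ennreal \<bar>u x\<bar> \<partial>lborel) \<le> 1"
    and n: "n \<ge> 1" "real n * q \<ge> 1" and t: "t \<le> 1"
  shows "\<bar>(VR hb ^^ n) u t\<bar> \<le> c ^ n * A (n - 1) * exp \<nu>'"
proof -
  have "ennreal \<bar>(VR hb ^^ n) u t\<bar> \<le> (conv H ^^ n) (\<lambda>x. ennreal \<bar>u x\<bar>) t" by (rule bn_bound)
  also have "\<dots> \<le> ennreal (c ^ n * A (n - 1) * exp \<nu>') * (\<integral>\<^sup>+x. ennreal \<bar>u x\<bar> \<partial>lborel)"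
    by (rule H_pow_bound1) (use u0 n t in auto)
  also have "\<dots> \<le> ennreal (c ^ n * A (n - 1) * exp \<nu>') * 1"
    by (intro mult_left_mono uint) auto
  finally have e: "ennreal \<bar>(VR hb ^^ n) u t\<bar> \<le> ennreal (c ^ n * A (n - 1) * exp \<nu>')" by simp
  have "0 \<le> c ^ n * A (n - 1) * exp \<nu>'" using c_pos A_pos[of "n - 1"] by simp
  then show ?thesis using e ennreal_le_iff by blast
qed

end

context ker begin
definition "Gr = enn2real Gn"
definition "Ubd n = (\<Sum>k<mm. real (n choose Suc k) * (Gr ^ Suc k * Bd (n - Suc k)))"

lemma Gn_fin: "Gn < \<infinity>"
proof -
  have "Gn \<le> (\<integral>\<^sup>+x. ennreal \<bar>kb x\<bar> + ennreal \<bar>hb x\<bar> \<partial>lborel)"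
    unfolding Gn_def
  proof (intro nn_integral_mono)
    fix x
    have "\<bar>kb x - hb x\<bar> \<le> \<bar>kb x\<bar> + \<bar>hb x\<bar>" by (rule abs_triangle_ineq4)
    then have "ennreal \<bar>kb x - hb x\<bar> \<le> ennreal (\<bar>kb x\<bar> + \<bar>hb x\<bar>)" by (rule ennreal_leI)
    then show "G x \<le> ennreal \<bar>kb x\<bar> + ennreal \<bar>hb x\<bar>" by (simp add: G_def ennreal_plus)
  qed
  also have "\<dots> = (\<integral>\<^sup>+x. ennreal \<bar>kb x\<bar> \<partial>lborel) + (\<integral>\<^sup>+x. ennreal \<bar>hb x\<bar> \<partial>lborel)"
    by (rule nn_integral_add) auto
  also have "\<dots> < \<infinity>" using hint kint by (simp add: less_top)
  finally show ?thesis .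
qed

end

context ker begin
lemma diff_bound:
  assumes [measurable]: "u \<in> borel_measurable borel" and u0: "\<And>s. s < 0 \<Longrightarrow> u s = 0"
    and uint: "(\<integral>\<^sup>+x. ennreal \<bar>u x\<bar> \<partial>lborel) \<le> 1"
    and n: "n > mm" "real (n - mm) * q \<ge> 1"
  shows "AE t in lborel. t \<le> 1 \<longrightarrow> \<bar>(VR kb ^^ n) u t - (VR hb ^^ n) u t\<bar> \<le> Ubd n"
proof -
  have uint': "(\<integral>\<^sup>+x. ennreal \<bar>u x\<bar> \<partial>lborel) < \<infinity>" using uint by (simp add: le_less_trans)
  show ?thesis using diff_AE[OF assms(1) uint', of n]
  proof eventually_elim
    case (elim t)
    show ?case
    proof
      assume t: "t \<le> 1"
      let ?W = "\<lambda>x. ennreal \<bar>u x\<bar>"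
      have "ennreal \<bar>(VR kb ^^ n) u t - (VR hb ^^ n) u t\<bar> \<le> Gam ?W n t" by (rule elim)
      also have "\<dots> \<le> (\<Sum>k<mm. of_nat (n choose Suc k) * (Gn ^ Suc k * (ennreal (Bd (n - Suc k)) * (\<integral>\<^sup>+x. ?W x \<partial>lborel))))"
        by (rule Gam_bound) (use u0 t n in auto)
      also have "\<dots> \<le> (\<Sum>k<mm. of_nat (n choose Suc k) * (Gn ^ Suc k * (ennreal (Bd (n - Suc k)) * 1)))"
        by (intro sum_mono mult_left_mono uint) auto
      also have "\<dots> = ennreal (Ubd n)"
      proof -
        have G: "Gn = ennreal Gr" using Gn_fin by (simp add: Gr_def less_top[symmetric])
        have "Gr \<ge> 0" by (simp add: Gr_def)
        then have "of_nat (n choose Suc k) * (ennreal Gr ^ Suc k * (ennreal (Bd (n - Suc k)) * 1))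
            = ennreal (real (n choose Suc k) * (Gr ^ Suc k * Bd (n - Suc k)))" for k
          using Bd_nonneg by (simp add: ennreal_of_nat_eq_real_of_nat ennreal_mult ennreal_power)
        moreover have "0 \<le> real (n choose Suc k) * (Gr ^ Suc k * Bd (n - Suc k))" for k
          using \<open>Gr \<ge> 0\<close> Bd_nonneg by simp
        ultimately show ?thesis unfolding Ubd_def G by (simp add: sum_ennreal)
      qed
      finally show "\<bar>(VR kb ^^ n) u t - (VR hb ^^ n) u t\<bar> \<le> Ubd n"
        by (subst (asm) ennreal_le_iff) (auto simp: Ubd_def Gr_def Bd_nonneg intro!: sum_nonneg)
    qed
  qed
qed


end

lemma Beta_lower:
  fixes x q \<theta> :: real
  assumes x: "1 \<le> x" and th: "0 < \<theta>" "\<theta> < 1" and q: "0 < q"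
  shows "\<theta> powr (x - 1) * ((1 - \<theta>) powr q / q) \<le> Beta x q"
proof -
  have I1: "(\<integral>\<^sup>+y. ennreal (indicator {0..1-\<theta>} y * y powr (q - 1)) \<partial>lborel) = ennreal ((1 - \<theta>) powr q / q)"
  proof -
    have "((\<lambda>y. y powr (q - 1)) has_integral ((1 - \<theta>) powr (q - 1 + 1) / (q - 1 + 1))) {0..1-\<theta>}"
      by (rule has_integral_powr_from_0) (use q th in auto)
    then have "integral\<^sup>N lborel (\<lambda>y. indicator {0..1-\<theta>} y * y powr (q - 1)) = ennreal ((1 - \<theta>) powr (q - 1 + 1) / (q - 1 + 1))"
      by (subst nn_integral_has_integral_lebesgue) auto
    then show ?thesis by simp
  qed
  have I2: "(\<integral>\<^sup>+s. ennreal (indicator {\<theta>..1} s * (1 - s) powr (q - 1)) \<partial>lborel)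
      = (\<integral>\<^sup>+y. ennreal (indicator {0..1-\<theta>} y * y powr (q - 1)) \<partial>lborel)"
  proof -
    have "(\<integral>\<^sup>+s. ennreal (indicator {\<theta>..1} s * (1 - s) powr (q - 1)) \<partial>lborel)
        = ennreal \<bar>-1\<bar> * (\<integral>\<^sup>+y. ennreal (indicator {\<theta>..1} (1 + (-1) * y) * (1 - (1 + (-1) * y)) powr (q - 1)) \<partial>lborel)"
      by (rule nn_integral_real_affine) auto
    also have "\<dots> = (\<integral>\<^sup>+y. ennreal (indicator {0..1-\<theta>} y * y powr (q - 1)) \<partial>lborel)"
      by (auto intro!: nn_integral_cong simp: indicator_def)
    finally show ?thesis .
  qed
  have "ennreal (\<theta> powr (x - 1) * ((1 - \<theta>) powr q / q))
      = ennreal (\<theta> powr (x - 1)) * (\<integral>\<^sup>+s. ennreal (indicator {\<theta>..1} s * (1 - s) powr (q - 1)) \<partial>lborel)"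
    unfolding I2 I1 using th q by (subst ennreal_mult[symmetric]) auto
  also have "\<dots> = (\<integral>\<^sup>+s. ennreal (\<theta> powr (x - 1) * (indicator {\<theta>..1} s * (1 - s) powr (q - 1))) \<partial>lborel)"
    by (subst nn_integral_cmult[symmetric]) (auto simp: ennreal_mult)
  also have "\<dots> \<le> (\<integral>\<^sup>+s. ennreal (indicator {0..1} s * (s powr (x - 1) * (1 - s) powr (q - 1))) \<partial>lborel)"
  proof (intro nn_integral_mono ennreal_leI)
    fix s
    show "\<theta> powr (x - 1) * (indicator {\<theta>..1} s * (1 - s) powr (q - 1)) \<le> indicator {0..1} s * (s powr (x - 1) * (1 - s) powr (q - 1))"
    proof (cases "s \<in> {\<theta>..1}")
      case True
      have "\<theta> powr (x - 1) \<le> s powr (x - 1)" using True th x by (intro powr_mono2) auto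
      then show ?thesis using True th by (auto intro!: mult_right_mono)
    qed (auto simp: indicator_def)
  qed
  also have "\<dots> = ennreal (Beta (x - 1 + 1) (q - 1 + 1))" by (rule nn_Beta) (use x q in auto)
  finally have "ennreal (\<theta> powr (x - 1) * ((1 - \<theta>) powr q / q)) \<le> ennreal (Beta x q)" by simp
  moreover have "0 \<le> Beta x q" using Beta_pos[of x q] x q by simp
  ultimately show ?thesis using ennreal_le_iff by blast
qed

context ker begin

lemma A_ratio:
  assumes th: "0 < \<theta>" "\<theta> < 1" and i: "1 \<le> i" "i \<le> n" "real i * q \<ge> 1"
  shows "A (i - 1) * (\<theta> powr (real n * q) * ((1 - \<theta>) powr q / q)) ^ (n - i) \<le> A (n - 1)"
proof -
  define \<beta> where "\<beta> = \<theta> powr (real n * q) * ((1 - \<theta>) powr q / q)"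
  have \<beta>0: "0 \<le> \<beta>" using th q_pos by (simp add: \<beta>_def)
  have step: "A (i - 1) * \<beta> ^ d \<le> A (i - 1 + d)" if "i - 1 + d \<le> n - 1" for d
    using that
  proof (induction d)
    case 0 then show ?case by simp
  next
    case (Suc d)
    let ?l = "Suc (i - 1 + d)"
    have l: "real ?l * q \<ge> 1"
    proof -
      have "real i * q \<le> real ?l * q" using i q_pos by (intro mult_right_mono) auto
      then show ?thesis using i by linarith
    qed
    have ln: "?l \<le> n" using Suc.prems i by auto
    have "\<beta> \<le> \<theta> powr (real ?l * q - 1) * ((1 - \<theta>) powr q / q)"
    proof -
      have "\<theta> powr (real n * q) \<le> \<theta> powr (real ?l * q - 1)"
      proof (rule powr_mono')
        have "real ?l * q \<le> real n * q" using ln q_pos by (intro mult_right_mono) auto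
        then show "real ?l * q - 1 \<le> real n * q" by linarith
      qed (use th in auto)
      then show ?thesis unfolding \<beta>_def using th q_pos by (intro mult_right_mono) auto
    qed
    also have "\<dots> \<le> Beta (real ?l * q) q" by (rule Beta_lower) (use l th q_pos in auto)
    finally have b: "\<beta> \<le> Beta (real ?l * q) q" .
    have "A (i - 1) * \<beta> ^ Suc d = (A (i - 1) * \<beta> ^ d) * \<beta>" by simp
    also have "\<dots> \<le> A (i - 1 + d) * Beta (real ?l * q) q"
      using Suc A_pos[of "i - 1"] A_pos[of "i - 1 + d"] \<beta>0 by (intro mult_mono b) auto
    also have "\<dots> = A (i - 1 + Suc d)" by (simp add: A_Suc)
    finally show ?case .
  qed
  have "A (i - 1) * \<beta> ^ (n - i) \<le> A (i - 1 + (n - i))" by (rule step) (use i in auto)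
  also have "i - 1 + (n - i) = n - 1" using i by auto
  finally show ?thesis by (simp add: \<beta>_def)
qed

end

context ker begin

definition "Lg = ln (1 - \<delta>)"
definition "\<theta> = exp (Lg / (2 * real mm))"
definition "\<kappa> = (1 - \<theta>) powr q / q"
definition "Ld n = Lc n / (real n * q + 1)"
definition "Xc j = (1 / c) ^ j * (1 / \<kappa>) ^ j * exp (\<nu>' + 2 * \<bar>\<mu>\<bar>) * exp (- (real j * q + 1) * Lg)"

lemma mm_ge1: "mm \<ge> 1"
proof -
  have "1 < 1 / \<delta>" using \<delta>_pos \<delta>_lt by (simp add: field_simps)
  then have "1 \<le> \<lfloor>1 / \<delta>\<rfloor>" by linarith
  then show ?thesis unfolding mm_def by linarith
qed

lemma Lg_neg: "Lg < 0" using \<delta>_pos \<delta>_lt by (simp add: Lg_def)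
lemma th_pos: "0 < \<theta>" by (simp add: \<theta>_def)
lemma th_lt1: "\<theta> < 1" using Lg_neg mm_ge1 by (simp add: \<theta>_def divide_neg_pos)
lemma kappa_pos: "0 < \<kappa>" using th_lt1 q_pos by (simp add: \<kappa>_def)
lemma ln_th_powr: "ln (\<theta> powr a) = a * (Lg / (2 * real mm))"
  using th_pos by (simp add: \<theta>_def)

lemma Bd_pos: "0 < Bd i" using c_pos A_pos \<delta>_lt by (simp add: Bd_def)

lemma term_bound:
  assumes n: "n > mm" "real (n - mm) * q \<ge> 1" and j: "1 \<le> j" "j \<le> mm"
  shows "Bd (n - j) \<le> Ld n * Xc j * (real n * q * (real n * q + 1)) * exp (real n * q * Lg / 2)"
proof -
  define i where "i = n - j"
  have i: "1 \<le> i" "i \<le> n" using n j by (auto simp: i_def)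
  have iq: "real i * q \<ge> 1"
  proof -
    have "real (n - mm) * q \<le> real i * q" using j q_pos by (intro mult_right_mono) (auto simp: i_def)
    then show ?thesis using n by linarith
  qed
  have nj: "n - i = j" using n j by (auto simp: i_def)
  define \<beta> where "\<beta> = \<theta> powr (real n * q) * \<kappa>"
  have \<beta>: "0 < \<beta>" using th_pos kappa_pos by (simp add: \<beta>_def)
  have Ar: "A (i - 1) * \<beta> ^ j \<le> A (n - 1)"
    using A_ratio[OF th_pos th_lt1 i iq] unfolding nj \<beta>_def \<kappa>_def .
  have lnA: "ln (A (i - 1)) + real j * ln \<beta> \<le> ln (A (n - 1))"
  proof -
    have "ln (A (i - 1) * \<beta> ^ j) \<le> ln (A (n - 1))" using Ar A_pos \<beta> by (subst ln_le_cancel_iff) auto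
    moreover have "ln (A (i - 1) * \<beta> ^ j) = ln (A (i - 1)) + real j * ln \<beta>"
      using A_pos[of "i - 1"] \<beta> by (simp add: ln_mult ln_realpow)
    ultimately show ?thesis by simp
  qed
  have lnb: "ln \<beta> = real n * q * (Lg / (2 * real mm)) + ln \<kappa>"
    using th_pos kappa_pos by (simp add: \<beta>_def ln_mult ln_th_powr) (simp add: \<theta>_def)
  have nq: "0 < real n * q" using n q_pos by simp
  have lnBd: "ln (Bd i) = real i * ln c + ln (A (i - 1)) + \<nu>' + (real i * q - 1) * Lg"
    using c_pos A_pos[of "i - 1"] \<delta>_lt by (simp add: Bd_def ln_mult ln_realpow Lg_def)
  have lnLd: "ln (Ld n) = real n * ln c + ln (A (n - 1)) - 2 * \<bar>\<mu>\<bar> - ln (real n * q) - ln (real n * q + 1)"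
  proof -
    have e: "Ld n = c ^ n * A (n - 1) * exp (- 2 * \<bar>\<mu>\<bar>) / (real n * q) / (real n * q + 1)"
      by (simp add: Ld_def Lc_def)
    have p1: "0 < c ^ n * A (n - 1) * exp (- 2 * \<bar>\<mu>\<bar>)" using c_pos A_pos[of "n - 1"] by simp
    have p3: "0 < real n * q + 1" using nq by linarith
    have "ln (Ld n) = ln (c ^ n * A (n - 1) * exp (- 2 * \<bar>\<mu>\<bar>)) - ln (real n * q) - ln (real n * q + 1)"
      unfolding e using p1 nq p3 by (simp add: ln_divide_pos ln_mult_pos[OF nq p3] del: ln_div)
    also have "ln (c ^ n * A (n - 1) * exp (- 2 * \<bar>\<mu>\<bar>)) = real n * ln c + ln (A (n - 1)) - 2 * \<bar>\<mu>\<bar>"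
      using c_pos A_pos[of "n - 1"] by (simp add: ln_mult ln_realpow)
    finally show ?thesis .
  qed
  have lnXc: "ln (Xc j) = - real j * ln c - real j * ln \<kappa> + (\<nu>' + 2 * \<bar>\<mu>\<bar>) - (real j * q + 1) * Lg"
    using c_pos kappa_pos by (simp add: Xc_def ln_mult ln_realpow ln_div algebra_simps)
  have pos: "0 < Ld n" "0 < Xc j" "0 < real n * q * (real n * q + 1)"
    using Lc_pos[of n] n nq c_pos kappa_pos by (auto simp: Ld_def Xc_def)
  have lnR: "ln (Ld n * Xc j * (real n * q * (real n * q + 1)) * exp (real n * q * Lg / 2))
      = ln (Ld n) + ln (Xc j) + ln (real n * q) + ln (real n * q + 1) + real n * q * Lg / 2"
  proof -
    have a1: "0 < Ld n * Xc j" using pos by simp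
    have a2: "0 < Ld n * Xc j * (real n * q * (real n * q + 1))" using pos by simp
    have p3: "0 < real n * q + 1" using nq by linarith
    show ?thesis
      by (simp only: ln_mult_pos[OF a2 exp_gt_zero] ln_exp ln_mult_pos[OF a1 pos(3)] ln_mult_pos[OF pos(1,2)] ln_mult_pos[OF nq p3])
  qed
  have key: "0 \<le> (- (real n * q * Lg)) * (1 / 2 - real j / (2 * real mm))"
  proof (rule mult_nonneg_nonneg)
    have "real n * q * Lg < 0" using nq Lg_neg by (rule mult_pos_neg)
    then show "0 \<le> - (real n * q * Lg)" by simp
    have "real j / (2 * real mm) \<le> 1 / 2" using j mm_ge1 by (simp add: field_simps)
    then show "0 \<le> 1 / 2 - real j / (2 * real mm)" by simp
  qed
  have ri: "real i = real n - real j" using n j by (simp add: i_def of_nat_diff)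
  have "ln (Bd i) \<le> ln (Ld n * Xc j * (real n * q * (real n * q + 1)) * exp (real n * q * Lg / 2))"
  proof -
    have "ln (Ld n * Xc j * (real n * q * (real n * q + 1)) * exp (real n * q * Lg / 2)) - ln (Bd i)
        \<ge> (- (real n * q * Lg)) * (1 / 2 - real j / (2 * real mm))"
    proof -
      have "ln (Ld n * Xc j * (real n * q * (real n * q + 1)) * exp (real n * q * Lg / 2)) - ln (Bd i)
          = (ln (A (n - 1)) - ln (A (i - 1)) - real j * ln \<beta>) + (- (real n * q * Lg)) * (1 / 2 - real j / (2 * real mm))"
        unfolding lnR lnLd lnXc lnBd lnb ri using mm_ge1 by (simp add: field_simps)
      then show ?thesis using lnA by linarith
    qed
    then show ?thesis using key by linarith
  qed
  then show ?thesis unfolding i_def[symmetric] using Bd_pos pos by (subst (asm) ln_le_cancel_iff) auto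
qed

end

lemma poly_exp_lim:
  fixes q e :: real
  assumes "q > 0" "e > 0"
  shows "(\<lambda>n. real n ^ m * (real n * q * (real n * q + 1)) * exp (- e * real n)) \<longlonglongrightarrow> 0"
  using assms by real_asymp

context ker begin

lemma Ld_pos: "n \<ge> 1 \<Longrightarrow> 0 < Ld n"
  using Lc_pos q_pos by (simp add: Ld_def add_pos_nonneg)

lemma Ubd_nonneg: "0 \<le> Ubd n"
  unfolding Ubd_def Gr_def using Bd_nonneg by (intro sum_nonneg mult_nonneg_nonneg) auto

lemma ratio_lim: "(\<lambda>n. Ubd n / Ld n) \<longlonglongrightarrow> 0"
proof -
  define e where "e = - (q * Lg) / 2"
  have e: "e > 0" using q_pos Lg_neg by (simp add: e_def mult_pos_neg)
  define g where "g n = real n ^ mm * (real n * q * (real n * q + 1)) * exp (- e * real n)" for n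
  have g: "g \<longlonglongrightarrow> 0" unfolding g_def by (rule poly_exp_lim[OF q_pos e])
  define B where "B n = (\<Sum>k<mm. Gr ^ Suc k * Xc (Suc k) * g n)" for n
  have B: "B \<longlonglongrightarrow> 0" unfolding B_def
    by (rule tendsto_null_sum) (auto intro!: tendsto_mult_right_zero g)
  have ev: "eventually (\<lambda>n. n > mm \<and> real (n - mm) * q \<ge> 1) sequentially"
  proof -
    obtain N :: nat where N: "1 / q \<le> real N" using real_arch_simple by blast
    have "n > mm \<and> real (n - mm) * q \<ge> 1" if "n \<ge> mm + N + 1" for n
    proof
      show "n > mm" using that by simp
      have "real N \<le> real (n - mm)" using that by simp
      then have "1 / q \<le> real (n - mm)" using N by linarith
      then have "1 / q * q \<le> real (n - mm) * q" using q_pos by (intro mult_right_mono) auto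
      moreover have "1 / q * q = 1" using q_pos by simp
      ultimately show "real (n - mm) * q \<ge> 1" by linarith
    qed
    then show ?thesis unfolding eventually_sequentially by blast
  qed
  show ?thesis
  proof (rule tendsto_sandwich[OF _ _ tendsto_const B])
    show "eventually (\<lambda>n. 0 \<le> Ubd n / Ld n) sequentially"
      using ev by eventually_elim (use Ubd_nonneg Ld_pos in \<open>auto intro!: divide_nonneg_pos\<close>)
    show "eventually (\<lambda>n. Ubd n / Ld n \<le> B n) sequentially"
      using ev
    proof eventually_elim
      case (elim n)
      have n1: "n \<ge> 1" using elim by auto
      have Ldp: "0 < Ld n" by (rule Ld_pos[OF n1])
      have "Ubd n = (\<Sum>k<mm. real (n choose Suc k) * (Gr ^ Suc k * Bd (n - Suc k)))" by (simp add: Ubd_def)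
      also have "\<dots> \<le> (\<Sum>k<mm. real n ^ mm * (Gr ^ Suc k * (Ld n * Xc (Suc k) * (real n * q * (real n * q + 1)) * exp (real n * q * Lg / 2))))"
      proof (rule sum_mono)
        fix k assume k: "k \<in> {..<mm}"
        have "n choose Suc k \<le> n ^ Suc k" using elim k by (intro binomial_le_pow) auto
        then have "real (n choose Suc k) \<le> real (n ^ Suc k)" by (simp only: of_nat_le_iff)
        then have "real (n choose Suc k) \<le> real n ^ Suc k" by simp
        also have "\<dots> \<le> real n ^ mm" using n1 k by (intro power_increasing) auto
        finally have a: "real (n choose Suc k) \<le> real n ^ mm" .
        have b: "Gr ^ Suc k * Bd (n - Suc k) \<le> Gr ^ Suc k * (Ld n * Xc (Suc k) * (real n * q * (real n * q + 1)) * exp (real n * q * Lg / 2))"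
          using elim k by (intro mult_left_mono term_bound) (auto simp: Gr_def)
        have c: "0 \<le> Gr ^ Suc k * Bd (n - Suc k)" using Bd_nonneg by (simp add: Gr_def)
        show "real (n choose Suc k) * (Gr ^ Suc k * Bd (n - Suc k)) \<le> real n ^ mm * (Gr ^ Suc k * (Ld n * Xc (Suc k) * (real n * q * (real n * q + 1)) * exp (real n * q * Lg / 2)))"
          by (rule mult_mono[OF a b _ c]) simp
      qed
      also have "\<dots> = Ld n * B n"
        unfolding B_def g_def e_def by (simp add: sum_distrib_left mult_ac)
      finally show ?case using Ldp by (simp add: divide_le_eq mult.commute)
    qed
  qed
qed

end

lemma AE_shift_reflect:
  fixes P :: "real \<Rightarrow> bool"
  assumes "AE x in lborel. P x"
  shows "AE s in lborel. P (t - s)"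
proof -
  from assms obtain N where N: "{x \<in> space lborel. \<not> P x} \<subseteq> N" "emeasure lborel N = 0" "N \<in> sets lborel"
    by (rule AE_E)
  have "AE x in lborel. x \<notin> N" using N by (intro AE_not_in) auto
  then have "AE s in lborel. t + (-1) * s \<notin> N"
    by (intro AE_borel_affine) (use N in auto)
  then show ?thesis by eventually_elim (use N in auto)
qed

lemma Volterra_VR:
  fixes F W f w :: "real \<Rightarrow> real"
  assumes [measurable]: "f \<in> borel_measurable borel" and fz: "\<And>x. x \<notin> {0<..1} \<Longrightarrow> f x = 0"
    and Ff: "AE x in lborel. x \<in> {0<..1} \<longrightarrow> F x = f x"
    and [measurable]: "w \<in> borel_measurable borel" and wz: "\<And>x. x \<notin> {0..1} \<Longrightarrow> w x = 0"
    and Ww: "AE x in lborel. x \<in> {0..1} \<longrightarrow> W x = w x"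
    and t: "t \<in> {0..1}"
  shows "Volterra F W t = VR f w t"
proof -
  have ae: "AE s in lborel. indicator {0..t} s *\<^sub>R (F (t - s) * W s) = f (t - s) * w s"
    using AE_shift_reflect[OF Ff, of t] Ww AE_lborel_singleton[of t]
  proof eventually_elim
    case (elim s)
    show ?case
    proof (cases "s \<in> {0..t}")
      case True
      then have "s \<in> {0..1}" "t - s \<in> {0<..1}" using t elim(3) by auto
      then show ?thesis using elim True by simp
    next
      case False
      then have "s < 0 \<or> t - s < 0" by auto
      then have "f (t - s) * w s = 0" using fz wz by auto
      then show ?thesis using False by simp
    qed
  qed
  have m2: "(\<lambda>s. f (t - s) * w s) \<in> borel_measurable lebesgue"
    by (intro measurable_completion) measurable
  have ae': "AE s in lebesgue. f (t - s) * w s = indicator {0..t} s *\<^sub>R (F (t - s) * W s)"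
    using AE_completion[OF ae] by (auto elim: eventually_mono)
  have m1: "(\<lambda>s. indicator {0..t} s *\<^sub>R (F (t - s) * W s)) \<in> borel_measurable lebesgue"
    by (rule borel_measurable_AE[OF m2 ae'])
  have "Volterra F W t = integral\<^sup>L lebesgue (\<lambda>s. indicator {0..t} s *\<^sub>R (F (t - s) * W s))"
    by (simp add: Volterra_def set_lebesgue_integral_def)
  also have "\<dots> = integral\<^sup>L lebesgue (\<lambda>s. f (t - s) * w s)"
    by (rule integral_cong_AE[OF m1 m2]) (use ae' in \<open>auto elim: eventually_mono\<close>)
  also have "\<dots> = (\<integral>s. f (t - s) * w s \<partial>lborel)"
    by (rule integral_completion) measurable
  also have "\<dots> = VR f w t" using t by (simp add: VR_def)
  finally show ?thesis .
qed

lemma Volterra_pow_VR: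
  fixes F W f w :: "real \<Rightarrow> real"
  assumes [measurable]: "f \<in> borel_measurable borel" and fz: "\<And>x. x \<notin> {0<..1} \<Longrightarrow> f x = 0"
    and Ff: "AE x in lborel. x \<in> {0<..1} \<longrightarrow> F x = f x"
    and [measurable]: "w \<in> borel_measurable borel" and wz: "\<And>x. x \<notin> {0..1} \<Longrightarrow> w x = 0"
    and Ww: "AE x in lborel. x \<in> {0..1} \<longrightarrow> W x = w x"
  shows "t \<in> {0..1} \<Longrightarrow> (Volterra F ^^ Suc n) W t = (VR f ^^ Suc n) w t"
proof (induction n arbitrary: t)
  case 0 then show ?case using Volterra_VR[OF assms] by simp
next
  case (Suc n)
  have m: "(VR f ^^ Suc n) w \<in> borel_measurable borel" by (rule VR_pow_measurable) auto
  have z: "(VR f ^^ Suc n) w x = 0" if "x \<notin> {0..1}" for x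
    using that by (simp add: VR_zero)
  have ae: "AE x in lborel. x \<in> {0..1} \<longrightarrow> (Volterra F ^^ Suc n) W x = (VR f ^^ Suc n) w x"
    using Suc.IH by (intro AE_I2) auto
  have "(Volterra F ^^ Suc (Suc n)) W t = Volterra F ((Volterra F ^^ Suc n) W) t" by simp
  also have "\<dots> = VR f ((VR f ^^ Suc n) w) t"
    by (rule Volterra_VR[OF assms(1) fz Ff m z ae Suc.prems])
  finally show ?case by simp
qed

lemma borel_version:
  fixes u :: "real \<Rightarrow> real"
  assumes "u \<in> borel_measurable L01"
  obtains ub where "ub \<in> borel_measurable borel" "\<And>x. x \<notin> {0..1} \<Longrightarrow> ub x = 0"
    "AE x in lborel. x \<in> {0..1} \<longrightarrow> u x = ub x"
proof -
  have "(\<lambda>x. indicator {0..1} x *\<^sub>R u x) \<in> borel_measurable lebesgue"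
    using assms by (subst (asm) borel_measurable_restrict_space_iff) auto
  then obtain u1 where u1: "u1 \<in> borel_measurable lborel" "AE x in lborel. indicator {0..1} x *\<^sub>R u x = u1 x"
    using completion_ex_borel_measurable_real by blast
  define ub where "ub x = indicator {0..1} x * u1 x" for x
  have [measurable]: "u1 \<in> borel_measurable borel" using u1(1) by (simp add: measurable_lborel1)
  show ?thesis
  proof
    show "ub \<in> borel_measurable borel" unfolding ub_def[abs_def] by measurable
    show "ub x = 0" if "x \<notin> {0..1}" for x using that by (simp add: ub_def)
    show "AE x in lborel. x \<in> {0..1} \<longrightarrow> u x = ub x"
      using u1(2) by eventually_elim (auto simp: ub_def)
  qed
qed

lemma ball_version:
  fixes u :: "real \<Rightarrow> real"
  assumes p: "1 \<le> p" and u: "in_Lp p u" "Lp_norm p u \<le> 1"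
  obtains ub where "ub \<in> borel_measurable borel" "\<And>x. x \<notin> {0..1} \<Longrightarrow> ub x = 0"
    "AE x in lborel. x \<in> {0..1} \<longrightarrow> u x = ub x" "(\<integral>\<^sup>+x. ennreal \<bar>ub x\<bar> \<partial>lborel) \<le> 1"
proof -
  have um: "u \<in> borel_measurable L01" using u by (simp add: in_Lp_def)
  obtain ub where ub: "ub \<in> borel_measurable borel" "\<And>x. x \<notin> {0..1} \<Longrightarrow> ub x = 0"
    "AE x in lborel. x \<in> {0..1} \<longrightarrow> u x = ub x"
    using borel_version[OF um] by blast
  have "(\<integral>\<^sup>+x. ennreal \<bar>ub x\<bar> \<partial>lborel) = (\<integral>\<^sup>+x. ennreal \<bar>ub x\<bar> * indicator {0..1} x \<partial>lborel)"
    by (intro nn_integral_cong) (auto simp: ub(2) indicator_def)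
  also have "\<dots> = (\<integral>\<^sup>+x. ennreal \<bar>ub x\<bar> \<partial>L01)" by (simp add: nn_on01)
  also have "\<dots> = (\<integral>\<^sup>+x. ennreal \<bar>u x\<bar> \<partial>L01)"
  proof (rule nn_integral_cong_AE)
    have "AE x in L01. x \<in> {0..1} \<longrightarrow> u x = ub x" by (rule AE_L01_from_lborel[OF ub(3)])
    moreover have "AE x in L01. x \<in> {0..1}" by (rule AE_I2) simp
    ultimately show "AE x in L01. ennreal \<bar>ub x\<bar> = ennreal \<bar>u x\<bar>" by eventually_elim auto
  qed
  also have "\<dots> \<le> ennreal (Lp_norm p u)" by (rule Lp_lower[OF p um u(1)])
  also have "\<dots> \<le> 1" using u(2) by simp
  finally show ?thesis using ub that by blast
qed

context ker begin

lemma ev_large: "eventually (\<lambda>n. n > mm \<and> real (n - mm) * q \<ge> 1) sequentially"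
proof -
  obtain N :: nat where N: "1 / q \<le> real N" using real_arch_simple by blast
  have "n > mm \<and> real (n - mm) * q \<ge> 1" if "n \<ge> mm + N + 1" for n
  proof
    show "n > mm" using that by simp
    have "real N \<le> real (n - mm)" using that by simp
    then have "1 / q \<le> real (n - mm)" using N by linarith
    then have "1 / q * q \<le> real (n - mm) * q" using q_pos by (intro mult_right_mono) auto
    moreover have "1 / q * q = 1" using q_pos by simp
    ultimately show "real (n - mm) * q \<ge> 1" by linarith
  qed
  then show ?thesis unfolding eventually_sequentially by blast
qed

lemma nq_ge: "n > mm \<Longrightarrow> real (n - mm) * q \<ge> 1 \<Longrightarrow> real n * q \<ge> 1"
proof -
  assume "n > mm" "real (n - mm) * q \<ge> 1"
  moreover have "real (n - mm) * q \<le> real n * q" using q_pos by (intro mult_right_mono) auto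
  ultimately show ?thesis by linarith
qed

end

context ker begin

lemma main:
  fixes h k :: "real \<Rightarrow> real" and p :: ereal
  assumes hh: "AE x in lborel. x \<in> {0<..1} \<longrightarrow> h x = hb x"
    and kk: "AE x in lborel. x \<in> {0<..1} \<longrightarrow> k x = kb x" and p: "1 \<le> p"
  shows "(\<lambda>n. op_norm p (\<lambda>u t. (Volterra k ^^ n) u t - (Volterra h ^^ n) u t)
              / op_norm p (Volterra h ^^ n)) \<longlonglongrightarrow> 0"
proof (rule tendsto_sandwich[OF _ _ tendsto_const ratio_lim])
  define ball where "ball = {u. in_Lp p u \<and> Lp_norm p u \<le> 1}"
  have fin: "0 \<le> op_norm p (\<lambda>u t. (Volterra k ^^ n) u t - (Volterra h ^^ n) u t) \<and> 0 < op_norm p (Volterra h ^^ n) \<and>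
      op_norm p (\<lambda>u t. (Volterra k ^^ n) u t - (Volterra h ^^ n) u t) / op_norm p (Volterra h ^^ n) \<le> Ubd n / Ld n"
    if n: "n > mm" "real (n - mm) * q \<ge> 1" for n
  proof -
    obtain n' where n': "n = Suc n'" using n by (cases n) auto
    have n1: "n \<ge> 1" using n by simp
    have nq: "real n * q \<ge> 1" by (rule nq_ge[OF n])
    let ?D = "\<lambda>u t. (Volterra k ^^ n) u t - (Volterra h ^^ n) u t"
    have one_ball: "(\<lambda>_. 1) \<in> ball"
    proof -
      have "in_Lp p (\<lambda>_. 1::real)" by (rule in_Lp_bounded[OF p]) auto
      moreover have "Lp_norm p (\<lambda>_. 1::real) \<le> 1" by (rule Lp_upper[OF p]) auto
      ultimately show ?thesis by (simp add: ball_def)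
    qed
    have zero_ball: "(\<lambda>_. 0) \<in> ball"
    proof -
      have "in_Lp p (\<lambda>_. 0::real)" by (rule in_Lp_bounded[OF p]) auto
      moreover have "Lp_norm p (\<lambda>_. 0::real) \<le> 0" by (rule Lp_upper[OF p]) auto
      ultimately show ?thesis by (simp add: ball_def)
    qed
    have bD: "Lp_norm p (?D u) \<le> Ubd n" if uin: "u \<in> ball" for u
    proof -
      obtain ub where ub: "ub \<in> borel_measurable borel" "\<And>x. x \<notin> {0..1} \<Longrightarrow> ub x = 0"
        "AE x in lborel. x \<in> {0..1} \<longrightarrow> u x = ub x" "(\<integral>\<^sup>+x. ennreal \<bar>ub x\<bar> \<partial>lborel) \<le> 1"
      proof -
        have "in_Lp p u" "Lp_norm p u \<le> 1" using uin by (auto simp: ball_def)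
        then show ?thesis using ball_version[OF p] that by blast
      qed
      have "Lp_norm p (?D u) = Lp_norm p (\<lambda>t. (VR kb ^^ n) ub t - (VR hb ^^ n) ub t)"
        unfolding n'
      proof (intro Lp_norm_cong)
        fix t :: real assume t: "t \<in> {0..1}"
        have e1: "(Volterra k ^^ Suc n') u t = (VR kb ^^ Suc n') ub t"
          by (rule Volterra_pow_VR[OF kb_meas kb_supp kk ub(1,2,3) t])
        have e2: "(Volterra h ^^ Suc n') u t = (VR hb ^^ Suc n') ub t"
          by (rule Volterra_pow_VR[OF hb_meas hb_supp hh ub(1,2,3) t])
        show "(Volterra k ^^ Suc n') u t - (Volterra h ^^ Suc n') u t = (VR kb ^^ Suc n') ub t - (VR hb ^^ Suc n') ub t"
          by (simp only: e1 e2)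
      qed
      also have "\<dots> \<le> Ubd n"
      proof (rule Lp_upper[OF p Ubd_nonneg])
        have "AE t in L01. t \<le> 1 \<longrightarrow> \<bar>(VR kb ^^ n) ub t - (VR hb ^^ n) ub t\<bar> \<le> Ubd n"
          by (rule AE_L01_from_lborel[OF diff_bound[OF ub(1) _ ub(4) n]]) (use ub(2) in auto)
        moreover have "AE t in L01. t \<le> 1" by (rule AE_I2) simp
        ultimately show "AE t in L01. \<bar>(VR kb ^^ n) ub t - (VR hb ^^ n) ub t\<bar> \<le> Ubd n"
          by eventually_elim auto
      qed
      finally show ?thesis .
    qed
    have bH: "Lp_norm p ((Volterra h ^^ n) u) \<le> c ^ n * A (n - 1) * exp \<nu>'" if uin: "u \<in> ball" for u
    proof -
      obtain ub where ub: "ub \<in> borel_measurable borel" "\<And>x. x \<notin> {0..1} \<Longrightarrow> ub x = 0"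
        "AE x in lborel. x \<in> {0..1} \<longrightarrow> u x = ub x" "(\<integral>\<^sup>+x. ennreal \<bar>ub x\<bar> \<partial>lborel) \<le> 1"
      proof -
        have "in_Lp p u" "Lp_norm p u \<le> 1" using uin by (auto simp: ball_def)
        then show ?thesis using ball_version[OF p] that by blast
      qed
      have "Lp_norm p ((Volterra h ^^ n) u) = Lp_norm p ((VR hb ^^ n) ub)"
        unfolding n' by (intro Lp_norm_cong) (rule Volterra_pow_VR[OF hb_meas hb_supp hh ub(1,2,3)])
      also have "\<dots> \<le> c ^ n * A (n - 1) * exp \<nu>'"
      proof (rule Lp_upper[OF p])
        show "0 \<le> c ^ n * A (n - 1) * exp \<nu>'" using c_pos A_pos[of "n - 1"] by simp
        show "AE t in L01. \<bar>(VR hb ^^ n) ub t\<bar> \<le> c ^ n * A (n - 1) * exp \<nu>'"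
          by (rule AE_I2) (use b_upper[OF ub(1) _ ub(4) n1 nq] ub(2) in auto)
      qed
      finally show ?thesis .
    qed
    have lowH: "Ld n \<le> Lp_norm p ((Volterra h ^^ n) (\<lambda>_. 1))"
    proof -
      have w: "indicator {0..1::real} \<in> borel_measurable borel" by simp
      have "Lp_norm p ((Volterra h ^^ n) (\<lambda>_. 1)) = Lp_norm p ((VR hb ^^ n) (indicator {0..1}))"
        unfolding n' by (intro Lp_norm_cong) (rule Volterra_pow_VR[OF hb_meas hb_supp hh w]; auto)
      moreover have "Lc n / (real n * q + 1) \<le> Lp_norm p ((VR hb ^^ n) (indicator {0..1}))"
        by (rule Lp_bn_lower[OF p n1])
      ultimately show ?thesis by (simp add: Ld_def)
    qed
    let ?SD = "(\<lambda>u. Lp_norm p (?D u)) ` ball" and ?SH = "(\<lambda>u. Lp_norm p ((Volterra h ^^ n) u)) ` ball"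
    have opD: "op_norm p ?D = Sup ?SD" by (simp add: op_norm_def ball_def)
    have opH: "op_norm p (Volterra h ^^ n) = Sup ?SH" by (simp add: op_norm_def ball_def)
    have bddD: "bdd_above ?SD" using bD by (auto intro!: bdd_aboveI2)
    have bddH: "bdd_above ?SH" using bH by (auto intro!: bdd_aboveI2)
    have D_le: "op_norm p ?D \<le> Ubd n" unfolding opD using bD zero_ball by (intro cSup_least) auto
    have D_ge: "0 \<le> op_norm p ?D"
    proof -
      have "Lp_norm p (?D (\<lambda>_. 0)) \<le> Sup ?SD" using zero_ball bddD by (intro cSup_upper) auto
      then show ?thesis unfolding opD using Lp_norm_nonneg order_trans by blast
    qed
    have H_ge: "Ld n \<le> op_norm p (Volterra h ^^ n)"
    proof -
      have "Lp_norm p ((Volterra h ^^ n) (\<lambda>_. 1)) \<le> Sup ?SH" using one_ball bddH by (intro cSup_upper) auto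
      then show ?thesis unfolding opH using lowH by linarith
    qed
    have Ldp: "0 < Ld n" by (rule Ld_pos[OF n1])
    show ?thesis
      using D_ge frac_le[OF Ubd_nonneg D_le Ldp H_ge] Ldp H_ge by simp
  qed
  show "eventually (\<lambda>n. 0 \<le> op_norm p (\<lambda>u t. (Volterra k ^^ n) u t - (Volterra h ^^ n) u t) / op_norm p (Volterra h ^^ n)) sequentially"
    using ev_large
  proof eventually_elim
    case (elim n)
    have "0 \<le> op_norm p (\<lambda>u t. (Volterra k ^^ n) u t - (Volterra h ^^ n) u t)" using fin elim by blast
    moreover have "0 < op_norm p (Volterra h ^^ n)" using fin elim by blast
    ultimately show ?case by simp
  qed
  show "eventually (\<lambda>n. op_norm p (\<lambda>u t. (Volterra k ^^ n) u t - (Volterra h ^^ n) u t) / op_norm p (Volterra h ^^ n) \<le> Ubd n / Ld n) sequentially"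
    using ev_large by eventually_elim (use fin in blast)
qed

end

theorem lemma4p2:
  fixes h k :: "real \<Rightarrow> real" and \<delta> c \<mu> \<nu> r :: real and p :: ereal
  assumes hL1: "integrable (lebesgue_on {0..1}) h"
    and kL1: "integrable (lebesgue_on {0..1}) k"
    and \<delta>: "0 < \<delta>" "\<delta> < 1"
    and eq: "AE t in lebesgue_on {0..\<delta>}. h t = k t"
    and c: "c > 0" and r: "r > -1"
    and lower: "\<And>t. t \<in> {0<..1} \<Longrightarrow> c * t powr r * exp (\<mu> * t) \<le> h t"
    and upper: "\<And>t. t \<in> {0<..1} \<Longrightarrow> h t \<le> c * t powr r * exp (\<nu> * t)"
    and p: "1 \<le> p"
  shows "(\<lambda>n. op_norm p (\<lambda>u t. (Volterra k ^^ n) u t - (Volterra h ^^ n) u t)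
              / op_norm p (Volterra h ^^ n)) \<longlonglongrightarrow> 0"
proof -
  have hm: "h \<in> borel_measurable L01" using hL1 by (rule borel_measurable_integrable)
  have km: "k \<in> borel_measurable L01" using kL1 by (rule borel_measurable_integrable)
  obtain h1 where h1: "h1 \<in> borel_measurable borel" "AE x in lborel. x \<in> {0..1} \<longrightarrow> h x = h1 x"
    using borel_version[OF hm] by metis
  obtain k1 where k1: "k1 \<in> borel_measurable borel" "AE x in lborel. x \<in> {0..1} \<longrightarrow> k x = k1 x"
    using borel_version[OF km] by metis
  note [measurable] = h1(1) k1(1)
  define Lf where "Lf x = c * x powr r * exp (\<mu> * x)" for x
  define Uf where "Uf x = c * x powr r * exp (\<nu> * x)" for x
  define hb where "hb x = (if x \<in> {0<..1} then min (max (h1 x) (Lf x)) (Uf x) else 0)" for x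
  define kb where "kb x = (if x \<in> {0<..\<delta>} then hb x else if x \<in> {\<delta><..1} then k1 x else 0)" for x
  have LU: "Lf x \<le> h x" "h x \<le> Uf x" if "x \<in> {0<..1}" for x
    using lower[OF that] upper[OF that] by (auto simp: Lf_def Uf_def)
  have hbm[measurable]: "hb \<in> borel_measurable borel" unfolding hb_def[abs_def] Lf_def Uf_def by measurable
  have kbm[measurable]: "kb \<in> borel_measurable borel" unfolding kb_def[abs_def] by measurable
  have hh: "AE x in lborel. x \<in> {0<..1} \<longrightarrow> h x = hb x"
    using h1(2)
  proof eventually_elim
    case (elim x)
    show ?case
    proof
      assume x: "x \<in> {0<..1}"
      then have "x \<in> {0..1}" by auto
      then have "h x = h1 x" using elim by auto
      then show "h x = hb x" using LU[OF x] x by (simp add: hb_def)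
    qed
  qed
  have eq': "AE x in lborel. x \<in> {0..\<delta>} \<longrightarrow> h x = k x"
    using eq by (subst (asm) AE_restrict_space_iff) (auto simp: AE_completion_iff)
  have kk: "AE x in lborel. x \<in> {0<..1} \<longrightarrow> k x = kb x"
    using hh eq' k1(2)
  proof eventually_elim
    case (elim x)
    show ?case
    proof
      assume x: "x \<in> {0<..1}"
      show "k x = kb x"
      proof (cases "x \<le> \<delta>")
        case True then show ?thesis using elim x by (auto simp: kb_def)
      next
        case False then show ?thesis using elim x by (auto simp: kb_def)
      qed
    qed
  qed
  have int_from: "(\<integral>\<^sup>+x. ennreal \<bar>f x\<bar> \<partial>lborel) < \<infinity>"
    if f0: "\<And>x. x \<notin> {0<..1} \<Longrightarrow> f x = 0" and ff: "AE x in lborel. x \<in> {0<..1} \<longrightarrow> F x = f x"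
      and FL: "integrable L01 F" for f F :: "real \<Rightarrow> real"
  proof -
    have "(\<integral>\<^sup>+x. ennreal \<bar>f x\<bar> \<partial>lborel) = (\<integral>\<^sup>+x. ennreal \<bar>F x\<bar> * indicator {0..1} x \<partial>lborel)"
    proof (rule nn_integral_cong_AE)
      show "AE x in lborel. ennreal \<bar>f x\<bar> = ennreal \<bar>F x\<bar> * indicator {0..1} x"
        using ff AE_lborel_singleton[of 0]
      proof eventually_elim
        case (elim x)
        show ?case
        proof (cases "x \<in> {0<..1}")
          case True then show ?thesis using elim by auto
        next
          case False then show ?thesis using elim f0[OF False] by (auto simp: indicator_def)
        qed
      qed
    qed
    also have "\<dots> = (\<integral>\<^sup>+x. ennreal (norm (F x)) \<partial>L01)" by (simp add: nn_on01)
    also have "\<dots> < \<infinity>" using FL by (simp only: integrable_iff_bounded)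
    finally show ?thesis .
  qed
  interpret ker hb kb c \<mu> \<nu> r \<delta>
  proof
    show "hb x = 0" if "x \<notin> {0<..1}" for x using that unfolding hb_def by auto
    show "kb x = 0" if "x \<notin> {0<..1}" for x using that \<delta> by (auto simp: kb_def)
    show "kb x = hb x" if "x \<le> \<delta>" for x using that by (auto simp: kb_def hb_def)
    show "c * x powr r * exp (\<mu> * x) \<le> hb x" if x: "x \<in> {0<..1}" for x
      using LU[OF x] x by (auto simp: hb_def Lf_def)
    show "hb x \<le> c * x powr r * exp (\<nu> * x)" if x: "x \<in> {0<..1}" for x
      using LU[OF x] x by (auto simp: hb_def Uf_def)
    show "(\<integral>\<^sup>+x. ennreal \<bar>hb x\<bar> \<partial>lborel) < \<infinity>"
      by (rule int_from[OF _ hh hL1]) (auto simp: hb_def)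
    show "(\<integral>\<^sup>+x. ennreal \<bar>kb x\<bar> \<partial>lborel) < \<infinity>"
      by (rule int_from[OF _ kk kL1]) (use \<delta> in \<open>auto simp: kb_def\<close>)
  qed (use c r \<delta> in auto)
  show ?thesis by (rule main[OF hh kk p])
qed

end
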